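(* Let $H$ be a Hilbert space of finite dimension $m$ and $n\ge 1$ an integer. For a two-outcome POVM $\{\Pi_p,\Pi_m\}$ on $H^{\otimes n}$ (positive operators with $\Pi_p+\Pi_m=I$), define $$p(\mathrm{pure}|p)=\frac{\int_{\mu(\rho)=1}\eta(\rho)\,\mathrm{Tr}(\rho^{\otimes n}\Pi_p)\,d\rho}{\int_{\mu(\rho)\le 1}\eta(\rho)\,\mathrm{Tr}(\rho^{\otimes n}\Pi_p)\,d\rho},\qquad p(\mathrm{mixed}|m)=\frac{\int_{\mu(\rho)<1}\eta(\rho)\,\mathrm{Tr}(\rho^{\otimes n}\Pi_m)\,d\rho}{\int_{\mu(\rho)\le 1}\eta(\rho)\,\mathrm{Tr}(\rho^{\otimes n}\Pi_m)\,d\rho},$$ where the integrals range over density operators $\rho$ on $H$. Then the POVM $$\Pi_p=\Phi(H^{\otimes n}_{sym}),\qquad \Pi_m=\Phi(H^{\otimes n}_{asym})$$ is a maximum confidence discrimination between pure and mixed states: it maximizes $p(\mathrm{pure}|p)$ and $p(\mathrm{mixed}|m)$ simultaneously over all two-outcome POVMs on $H^{\otimes n}$.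
   Context: $H^{\otimes n}_{sym}$ denotes the symmetric subspace of $H^{\otimes n}$ (vectors invariant under all permutations of the $n$ tensor factors, equivalently the span of all $|\psi\rangle^{\otimes n}$, $|\psi\rangle\in H$), and $H^{\otimes n}_{asym}$ its orthogonal complement; $\Phi(K)$ is the orthogonal projector onto a subspace $K$. The purity function $\mu$ on density operators satisfies $\mu(U\rho U^\dagger)=\mu(\rho)$ for all unitaries $U$, $\mu(\rho)=1$ iff $\rho$ is pure (rank one), and $0\le\mu(\rho)<1$ otherwise. The prior is a nonnegative density $\eta$ with respect to a measure $d\rho$ on density operators on $H$, with $\eta(U\rho U^\dagger)=\eta(\rho)$ for all unitaries $U$ (the measure $d\rho$ being invariant under $\rho\mapsto U\rho U^\dagger$). The quotients are considered only when their denominators are nonzero. *)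

theory Defs
  imports "HOL-Analysis.Analysis" "HOL-Probability.Probability" "Jordan_Normal_Form.Matrix"
begin

unbundle no vec_syntax

text \<open>The Hilbert space H of dimension m is modelled as complex m-vectors; operators on H
  are complex m x m matrices.  H^(tensor n) is modelled as complex (m^n)-vectors, where
  an index i < m^n is identified with the tuple of its n base-m digits.\<close>

definition mtrace :: "complex mat \<Rightarrow> complex" where
  "mtrace A = (\<Sum>i<dim_row A. A $$ (i,i))"

definition adj :: "complex mat \<Rightarrow> complex mat" where
  "adj A = Matrix.mat (dim_col A) (dim_row A) (\<lambda>(i,j). cnj (A $$ (j,i)))"

definition cinner :: "complex vec \<Rightarrow> complex vec \<Rightarrow> complex" where
  "cinner v w = (\<Sum>i<dim_vec v. cnj (v $ i) * w $ i)"

definition positive_op :: "nat \<Rightarrow> complex mat \<Rightarrow> bool" where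
  "positive_op N A \<longleftrightarrow> A \<in> carrier_mat N N \<and>
     (\<forall>v \<in> carrier_vec N. Im (cinner v (A *\<^sub>v v)) = 0 \<and> Re (cinner v (A *\<^sub>v v)) \<ge> 0)"

definition density_ops :: "nat \<Rightarrow> complex mat set" where
  "density_ops m = {\<rho>. positive_op m \<rho> \<and> mtrace \<rho> = 1}"

definition unitary_mat :: "nat \<Rightarrow> complex mat \<Rightarrow> bool" where
  "unitary_mat m U \<longleftrightarrow> U \<in> carrier_mat m m \<and> adj U * U = 1\<^sub>m m"

definition rank_one :: "nat \<Rightarrow> complex mat \<Rightarrow> bool" where
  "rank_one m \<rho> \<longleftrightarrow> (\<exists>\<psi> \<in> carrier_vec m. \<psi> \<noteq> 0\<^sub>v m \<and>
     \<rho> = Matrix.mat m m (\<lambda>(i,j). \<psi> $ i * cnj (\<psi> $ j)))"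

definition digit :: "nat \<Rightarrow> nat \<Rightarrow> nat \<Rightarrow> nat" where
  "digit m k i = (i div m ^ k) mod m"

definition tensor_pow :: "nat \<Rightarrow> nat \<Rightarrow> complex mat \<Rightarrow> complex mat" where
  "tensor_pow m n A = Matrix.mat (m ^ n) (m ^ n)
     (\<lambda>(i,j). \<Prod>k<n. A $$ (digit m k i, digit m k j))"

text \<open>Index obtained by permuting the tensor factors by sigma.\<close>
definition perm_idx :: "nat \<Rightarrow> nat \<Rightarrow> (nat \<Rightarrow> nat) \<Rightarrow> nat \<Rightarrow> nat" where
  "perm_idx m n \<sigma> i = (\<Sum>k<n. digit m (\<sigma> k) i * m ^ k)"

definition sym_subspace :: "nat \<Rightarrow> nat \<Rightarrow> complex vec set" where
  "sym_subspace m n = {v \<in> carrier_vec (m ^ n).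
     \<forall>\<sigma>. \<sigma> permutes {..<n} \<longrightarrow> (\<forall>i < m ^ n. v $ (perm_idx m n \<sigma> i) = v $ i)}"

definition orth_compl :: "nat \<Rightarrow> complex vec set \<Rightarrow> complex vec set" where
  "orth_compl N K = {v \<in> carrier_vec N. \<forall>w \<in> K. cinner w v = 0}"

definition asym_subspace :: "nat \<Rightarrow> nat \<Rightarrow> complex vec set" where
  "asym_subspace m n = orth_compl (m ^ n) (sym_subspace m n)"

definition is_orth_proj :: "nat \<Rightarrow> complex vec set \<Rightarrow> complex mat \<Rightarrow> bool" where
  "is_orth_proj N K P \<longleftrightarrow> P \<in> carrier_mat N N \<and> P * P = P \<and> adj P = P \<and>
     (\<lambda>v. P *\<^sub>v v) ` carrier_vec N = K"

definition povm2 :: "nat \<Rightarrow> complex mat \<Rightarrow> complex mat \<Rightarrow> bool" where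
  "povm2 N Pp Pm \<longleftrightarrow> positive_op N Pp \<and> positive_op N Pm \<and> Pp + Pm = 1\<^sub>m N"

definition wint :: "complex mat measure \<Rightarrow> (complex mat \<Rightarrow> real) \<Rightarrow> nat \<Rightarrow> nat
     \<Rightarrow> complex mat set \<Rightarrow> complex mat \<Rightarrow> real" where
  "wint M \<eta> m n S Q = (\<integral>\<rho>. indicator S \<rho> * (\<eta> \<rho> * Re (mtrace (tensor_pow m n \<rho> * Q))) \<partial>M)"

definition p_pure_p :: "complex mat measure \<Rightarrow> (complex mat \<Rightarrow> real) \<Rightarrow> (complex mat \<Rightarrow> real)
     \<Rightarrow> nat \<Rightarrow> nat \<Rightarrow> complex mat \<Rightarrow> real" where
  "p_pure_p M \<eta> \<mu> m n Pp =
     wint M \<eta> m n {\<rho>. \<mu> \<rho> = 1} Pp / wint M \<eta> m n {\<rho>. \<mu> \<rho> \<le> 1} Pp"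

definition p_mixed_m :: "complex mat measure \<Rightarrow> (complex mat \<Rightarrow> real) \<Rightarrow> (complex mat \<Rightarrow> real)
     \<Rightarrow> nat \<Rightarrow> nat \<Rightarrow> complex mat \<Rightarrow> real" where
  "p_mixed_m M \<eta> \<mu> m n Pm =
     wint M \<eta> m n {\<rho>. \<mu> \<rho> < 1} Pm / wint M \<eta> m n {\<rho>. \<mu> \<rho> \<le> 1} Pm"

end

theory Submission
  imports Defs "HOL-Combinatorics.List_Permutation" "HOL-Computational_Algebra.Polynomial"
begin

lemma digit_lt: "m \<ge> 1 \<Longrightarrow> digit m k i < m"
  unfolding digit_def by simp

lemma digit_expansion: "(\<Sum>k<n. digit m k i * m ^ k) = i mod m ^ n"
proof (induction n)
  case 0 then show ?case by simp
next
  case (Suc n)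
  have "i mod m ^ Suc n = i mod (m ^ n * m)" by (simp add: mult.commute)
  also have "\<dots> = m ^ n * (i div m ^ n mod m) + i mod m ^ n" by (rule mod_mult2_eq)
  finally show ?case using Suc by (simp add: digit_def mult.commute)
qed

lemma digit_inj:
  assumes "i < m ^ n" "j < m ^ n" "\<And>k. k < n \<Longrightarrow> digit m k i = digit m k j"
  shows "i = j"
proof -
  have "i = (\<Sum>k<n. digit m k i * m ^ k)" using digit_expansion[where n=n and m=m and i=i] assms(1) by simp
  also have "\<dots> = (\<Sum>k<n. digit m k j * m ^ k)" using assms(3) by (intro sum.cong) auto
  also have "\<dots> = j" using digit_expansion[where n=n and m=m and i=j] assms(2) by simp
  finally show ?thesis .
qed

lemma digit_sum_lt:
  fixes g :: "nat \<Rightarrow> nat"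
  assumes "\<And>j. j < n \<Longrightarrow> g j < m"
  shows "(\<Sum>j<n. g j * m ^ j) < m ^ n"
  using assms
proof (induction n)
  case 0 then show ?case by simp
next
  case (Suc n)
  have IH: "(\<Sum>j<n. g j * m ^ j) < m ^ n" using Suc by auto
  have g: "g n + 1 \<le> m" using Suc.prems[of n] by simp
  have "(\<Sum>j<Suc n. g j * m ^ j) = (\<Sum>j<n. g j * m ^ j) + g n * m ^ n" by simp
  also have "\<dots> < m ^ n + g n * m ^ n" using IH by simp
  also have "\<dots> = (g n + 1) * m ^ n" by simp
  also have "\<dots> \<le> m * m ^ n" using g by (intro mult_right_mono) auto
  finally show ?case by simp
qed

lemma digit_sum:
  fixes g :: "nat \<Rightarrow> nat"
  assumes "\<And>j. j < n \<Longrightarrow> g j < m" "k < n"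
  shows "digit m k (\<Sum>j<n. g j * m ^ j) = g k"
  using assms
proof (induction n)
  case 0 then show ?case by simp
next
  case (Suc n)
  define S where "S = (\<Sum>j<n. g j * m ^ j)"
  have S: "S < m ^ n" unfolding S_def using Suc.prems by (intro digit_sum_lt) auto
  have eq: "(\<Sum>j<Suc n. g j * m ^ j) = S + g n * m ^ n" by (simp add: S_def)
  show ?case
  proof (cases "k = n")
    case True
    have mn: "m ^ n \<noteq> 0" using S by (metis not_less0)
    have "(S + g n * m ^ n) div m ^ n = S div m ^ n + g n" using mn by simp
    then have "(S + g n * m ^ n) div m ^ n = g n" using S by simp
    then show ?thesis using True Suc.prems eq by (simp add: digit_def)
  next
    case False
    then have kn: "k < n" using Suc.prems by simp
    have "m ^ n = m ^ k * (m ^ (n - k - 1) * m)"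
    proof -
      have "n = k + Suc (n - k - 1)" using kn by simp
      then have "m ^ n = m ^ k * m ^ Suc (n - k - 1)" by (metis power_add)
      then show ?thesis by (simp add: ac_simps)
    qed
    moreover have "m ^ k \<noteq> 0" using S kn by (cases "m = 0") (auto simp: zero_power)
    ultimately have "(S + g n * m ^ n) div m ^ k = S div m ^ k + g n * m ^ (n - k - 1) * m"
    proof -
      assume a: "m ^ n = m ^ k * (m ^ (n - k - 1) * m)" and b: "m ^ k \<noteq> 0"
      have e: "S + g n * m ^ n = S + m ^ k * (g n * m ^ (n - k - 1) * m)" using a by (simp add: ac_simps)
      have "(S + g n * m ^ n) div m ^ k = (S + m ^ k * (g n * m ^ (n - k - 1) * m)) div m ^ k"
        by (simp only: e)
      also have "\<dots> = g n * m ^ (n - k - 1) * m + S div m ^ k" by (rule div_mult_self2[OF b])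
      finally show ?thesis by simp
    qed
    then have "digit m k (S + g n * m ^ n) = digit m k S"
      by (simp add: digit_def)
    then show ?thesis using Suc.IH[OF _ kn] Suc.prems eq S_def by simp
  qed
qed

lemma sum_digits_prod:
  fixes f :: "nat \<Rightarrow> nat \<Rightarrow> 'a::comm_semiring_1"
  assumes m: "m \<ge> 1"
  shows "(\<Sum>i<m ^ n. \<Prod>k<n. f k (digit m k i)) = (\<Prod>k<n. \<Sum>a<m. f k a)"
proof -
  define h where "h i = restrict (\<lambda>k. digit m k i) {..<n}" for i
  have bij: "bij_betw h {..<m ^ n} (Pi\<^sub>E {..<n} (\<lambda>_. {..<m}))"
  proof (rule bij_betwI')
    fix x y assume "x \<in> {..<m ^ n}" "y \<in> {..<m ^ n}"
    then show "(h x = h y) = (x = y)"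
      unfolding h_def using digit_inj[of x m n y]
      by (auto simp: restrict_def fun_eq_iff)
  next
    fix x assume "x \<in> {..<m ^ n}"
    then show "h x \<in> Pi\<^sub>E {..<n} (\<lambda>_. {..<m})" unfolding h_def using digit_lt[OF m] by auto
  next
    fix g assume g: "g \<in> Pi\<^sub>E {..<n} (\<lambda>_. {..<m})"
    define x where "x = (\<Sum>j<n. g j * m ^ j)"
    have "x < m ^ n" unfolding x_def using g by (intro digit_sum_lt) auto
    moreover have "h x = g"
      unfolding h_def x_def using g digit_sum[of n g m] by (auto simp: fun_eq_iff PiE_def extensional_def)
    ultimately show "\<exists>x\<in>{..<m ^ n}. g = h x" by auto
  qed
  have "(\<Prod>k<n. \<Sum>a<m. f k a) = (\<Sum>g\<in>Pi\<^sub>E {..<n} (\<lambda>_. {..<m}). \<Prod>k<n. f k (g k))"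
    by (rule prod_sum_PiE) auto
  also have "\<dots> = (\<Sum>i<m ^ n. \<Prod>k<n. f k (h i k))"
    by (rule sum.reindex_bij_betw[OF bij, symmetric])
  also have "\<dots> = (\<Sum>i<m ^ n. \<Prod>k<n. f k (digit m k i))"
    by (intro sum.cong prod.cong) (auto simp: h_def)
  finally show ?thesis by simp
qed

lemma perm_idx_lt: "m \<ge> 1 \<Longrightarrow> perm_idx m n \<sigma> i < m ^ n"
  unfolding perm_idx_def using digit_lt by (intro digit_sum_lt) auto

lemma digit_perm_idx:
  assumes "m \<ge> 1" "\<sigma> permutes {..<n}" "k < n"
  shows "digit m k (perm_idx m n \<sigma> i) = digit m (\<sigma> k) i"
  unfolding perm_idx_def using assms digit_lt by (intro digit_sum) auto

lemma perm_idx_bij: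
  assumes m: "m \<ge> 1" and s: "\<sigma> permutes {..<n}"
  shows "bij_betw (perm_idx m n \<sigma>) {..<m ^ n} {..<m ^ n}"
proof -
  have inj: "inj_on (perm_idx m n \<sigma>) {..<m ^ n}"
  proof (rule inj_onI)
    fix x y assume x: "x \<in> {..<m ^ n}" and y: "y \<in> {..<m ^ n}"
      and eq: "perm_idx m n \<sigma> x = perm_idx m n \<sigma> y"
    show "x = y"
    proof (rule digit_inj[of x m n y])
      fix k assume k: "k < n"
      obtain j where j: "j < n" "\<sigma> j = k"
        using s k by (metis lessThan_iff permutes_def)
      have "digit m j (perm_idx m n \<sigma> x) = digit m j (perm_idx m n \<sigma> y)" using eq by simp
      then show "digit m k x = digit m k y" using digit_perm_idx[OF m s j(1)] j by simp
    qed (use x y in auto)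
  qed
  have sub: "perm_idx m n \<sigma> ` {..<m ^ n} \<subseteq> {..<m ^ n}" using perm_idx_lt[OF m] by auto
  have "perm_idx m n \<sigma> ` {..<m ^ n} = {..<m ^ n}"
    by (rule endo_inj_surj[OF _ sub inj]) auto
  then show ?thesis using inj unfolding bij_betw_def by auto
qed


definition tpv :: "nat \<Rightarrow> nat \<Rightarrow> complex vec \<Rightarrow> complex vec" where
  "tpv m n \<phi> = vec (m ^ n) (\<lambda>i. \<Prod>k<n. \<phi> $ digit m k i)"

definition outer :: "complex vec \<Rightarrow> complex vec \<Rightarrow> complex mat" where
  "outer v w = Matrix.mat (dim_vec v) (dim_vec w) (\<lambda>(i,j). v $ i * cnj (w $ j))"

lemma tpv_carrier[simp]: "tpv m n \<phi> \<in> carrier_vec (m ^ n)"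
  unfolding tpv_def by simp

lemma tpv_index: "i < m ^ n \<Longrightarrow> tpv m n \<phi> $ i = (\<Prod>k<n. \<phi> $ digit m k i)"
  unfolding tpv_def by simp

lemma outer_carrier[simp]: "v \<in> carrier_vec N \<Longrightarrow> w \<in> carrier_vec N \<Longrightarrow> outer v w \<in> carrier_mat N N"
  unfolding outer_def by auto

lemma outer_index: "v \<in> carrier_vec N \<Longrightarrow> w \<in> carrier_vec N \<Longrightarrow> i < N \<Longrightarrow> j < N \<Longrightarrow>
  outer v w $$ (i,j) = v $ i * cnj (w $ j)"
  unfolding outer_def by auto

lemma tensor_pow_carrier[simp]: "tensor_pow m n A \<in> carrier_mat (m ^ n) (m ^ n)"
  unfolding tensor_pow_def by simp

lemma tensor_pow_index: "i < m ^ n \<Longrightarrow> j < m ^ n \<Longrightarrow>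
  tensor_pow m n A $$ (i,j) = (\<Prod>k<n. A $$ (digit m k i, digit m k j))"
  unfolding tensor_pow_def by simp

lemma mult_vec_index: "A \<in> carrier_mat N N' \<Longrightarrow> y \<in> carrier_vec N' \<Longrightarrow> i < N \<Longrightarrow>
  (A *\<^sub>v y) $ i = (\<Sum>j<N'. A $$ (i,j) * y $ j)"
  by (auto simp: scalar_prod_def atLeast0LessThan)

lemma cinner_def2: "x \<in> carrier_vec N \<Longrightarrow> cinner x y = (\<Sum>i<N. cnj (x $ i) * y $ i)"
  unfolding cinner_def by auto

lemma cinner_mult:
  assumes A: "A \<in> carrier_mat N N'" and x: "x \<in> carrier_vec N" and y: "y \<in> carrier_vec N'"
  shows "cinner x (A *\<^sub>v y) = (\<Sum>i<N. \<Sum>j<N'. cnj (x $ i) * A $$ (i,j) * y $ j)"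
proof -
  have "cinner x (A *\<^sub>v y) = (\<Sum>i<N. cnj (x $ i) * (A *\<^sub>v y) $ i)" by (rule cinner_def2[OF x])
  also have "\<dots> = (\<Sum>i<N. cnj (x $ i) * (\<Sum>j<N'. A $$ (i,j) * y $ j))"
    by (intro sum.cong refl arg_cong2[where f="(*)"] mult_vec_index[OF A y]) auto
  also have "\<dots> = (\<Sum>i<N. \<Sum>j<N'. cnj (x $ i) * A $$ (i,j) * y $ j)"
    by (simp add: sum_distrib_left mult.assoc)
  finally show ?thesis .
qed

lemma adj_carrier[simp]: "A \<in> carrier_mat N N' \<Longrightarrow> adj A \<in> carrier_mat N' N"
  unfolding adj_def by auto

lemma adj_index: "A \<in> carrier_mat N N' \<Longrightarrow> i < N' \<Longrightarrow> j < N \<Longrightarrow> adj A $$ (i,j) = cnj (A $$ (j,i))"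
  unfolding adj_def by auto

lemma cinner_adj:
  assumes A: "A \<in> carrier_mat N N'" and x: "x \<in> carrier_vec N" and y: "y \<in> carrier_vec N'"
  shows "cinner x (A *\<^sub>v y) = cinner (adj A *\<^sub>v x) y"
proof -
  have Ax: "adj A *\<^sub>v x \<in> carrier_vec N'" by (rule mult_mat_vec_carrier[OF adj_carrier[OF A] x])
  have "cinner (adj A *\<^sub>v x) y = (\<Sum>j<N'. cnj ((adj A *\<^sub>v x) $ j) * y $ j)" by (rule cinner_def2[OF Ax])
  also have "\<dots> = (\<Sum>j<N'. cnj (\<Sum>i<N. adj A $$ (j,i) * x $ i) * y $ j)"
    using A x by (intro sum.cong refl) (simp add: mult_vec_index[of _ N' N])
  also have "\<dots> = (\<Sum>j<N'. \<Sum>i<N. cnj (x $ i) * A $$ (i,j) * y $ j)"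
    using A by (intro sum.cong refl) (simp add: adj_index sum_distrib_right sum_distrib_left ac_simps)
  also have "\<dots> = (\<Sum>i<N. \<Sum>j<N'. cnj (x $ i) * A $$ (i,j) * y $ j)"
    by (rule sum.swap)
  also have "\<dots> = cinner x (A *\<^sub>v y)"
    by (rule cinner_mult[OF A x y, symmetric])
  finally show ?thesis by simp
qed

lemma mtrace_mult: "A \<in> carrier_mat N N \<Longrightarrow> B \<in> carrier_mat N N \<Longrightarrow>
  mtrace (A * B) = (\<Sum>i<N. \<Sum>j<N. A $$ (i,j) * B $$ (j,i))"
  unfolding mtrace_def by (auto simp: scalar_prod_def atLeast0LessThan intro!: sum.cong)

lemma mtrace_outer:
  assumes B: "B \<in> carrier_mat N N" and v: "v \<in> carrier_vec N" and w: "w \<in> carrier_vec N"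
  shows "mtrace (B * outer v w) = cinner w (B *\<^sub>v v)"
proof -
  have "mtrace (B * outer v w) = (\<Sum>i<N. \<Sum>j<N. B $$ (i,j) * outer v w $$ (j,i))"
    using B v w by (intro mtrace_mult) auto
  also have "\<dots> = (\<Sum>i<N. \<Sum>j<N. cnj (w $ i) * B $$ (i,j) * v $ j)"
    using v w by (intro sum.cong refl) (simp add: outer_index)
  also have "\<dots> = cinner w (B *\<^sub>v v)" by (rule cinner_mult[OF B w v, symmetric])
  finally show ?thesis .
qed

lemma tensor_outer:
  assumes "\<psi> \<in> carrier_vec m" and m: "m \<ge> 1"
  shows "tensor_pow m n (outer \<psi> \<psi>) = outer (tpv m n \<psi>) (tpv m n \<psi>)"
proof (rule eq_matI)
  fix i j assume "i < dim_row (outer (tpv m n \<psi>) (tpv m n \<psi>))" "j < dim_col (outer (tpv m n \<psi>) (tpv m n \<psi>))"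
  then have ij: "i < m ^ n" "j < m ^ n" by (auto simp: outer_def tpv_def)
  show "tensor_pow m n (outer \<psi> \<psi>) $$ (i, j) = outer (tpv m n \<psi>) (tpv m n \<psi>) $$ (i, j)"
    using ij assms digit_lt[OF m]
    by (simp add: tensor_pow_index outer_index[of _ "m ^ n"] outer_index[of _ m] tpv_index prod.distrib)
qed (auto simp: outer_def tensor_pow_def tpv_def)

lemma tensor_one:
  assumes m: "m \<ge> 1"
  shows "tensor_pow m n (1\<^sub>m m) = 1\<^sub>m (m ^ n)"
proof (rule eq_matI)
  fix i j assume "i < dim_row (1\<^sub>m (m ^ n) :: complex mat)" "j < dim_col (1\<^sub>m (m ^ n) :: complex mat)"
  then have ij: "i < m ^ n" "j < m ^ n" by auto
  show "tensor_pow m n (1\<^sub>m m) $$ (i, j) = 1\<^sub>m (m ^ n) $$ (i, j)"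
  proof (cases "i = j")
    case True then show ?thesis using ij digit_lt[OF m] by (simp add: tensor_pow_index)
  next
    case False
    then obtain k where k: "k < n" "digit m k i \<noteq> digit m k j" using digit_inj[OF ij] by blast
    have "(\<Prod>k<n. (1\<^sub>m m :: complex mat) $$ (digit m k i, digit m k j)) = 0"
      using k digit_lt[OF m] by (intro prod_zero) (auto intro!: bexI[of _ k])
    then show ?thesis using ij False by (simp add: tensor_pow_index)
  qed
qed (auto simp: tensor_pow_def)

lemma tpv_cinner:
  assumes m: "m \<ge> 1" and A: "A \<in> carrier_mat m m" and \<phi>: "\<phi> \<in> carrier_vec m" and \<chi>: "\<chi> \<in> carrier_vec m"
  shows "cinner (tpv m n \<chi>) (tensor_pow m n A *\<^sub>v tpv m n \<phi>) = (cinner \<chi> (A *\<^sub>v \<phi>)) ^ n"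
proof -
  have "cinner (tpv m n \<chi>) (tensor_pow m n A *\<^sub>v tpv m n \<phi>) =
    (\<Sum>i<m ^ n. \<Sum>j<m ^ n. cnj (tpv m n \<chi> $ i) * tensor_pow m n A $$ (i,j) * tpv m n \<phi> $ j)"
    by (rule cinner_mult) auto
  also have "\<dots> = (\<Sum>i<m ^ n. \<Sum>j<m ^ n. \<Prod>k<n. cnj (\<chi> $ digit m k i) * A $$ (digit m k i, digit m k j) * \<phi> $ digit m k j)"
  proof (intro sum.cong refl)
    fix i j assume i: "i \<in> {..<m ^ n}" and j: "j \<in> {..<m ^ n}"
    have "cnj (tpv m n \<chi> $ i) = (\<Prod>k<n. cnj (\<chi> $ digit m k i))"
      using i by (simp add: tpv_index)
    moreover have "tensor_pow m n A $$ (i,j) = (\<Prod>k<n. A $$ (digit m k i, digit m k j))"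
      using i j by (simp add: tensor_pow_index)
    moreover have "tpv m n \<phi> $ j = (\<Prod>k<n. \<phi> $ digit m k j)"
      using j by (simp add: tpv_index)
    ultimately show "cnj (tpv m n \<chi> $ i) * tensor_pow m n A $$ (i,j) * tpv m n \<phi> $ j =
      (\<Prod>k<n. cnj (\<chi> $ digit m k i) * A $$ (digit m k i, digit m k j) * \<phi> $ digit m k j)"
      by (simp only: prod.distrib)
  qed
  also have "\<dots> = (\<Sum>i<m ^ n. \<Prod>k<n. \<Sum>b<m. cnj (\<chi> $ digit m k i) * A $$ (digit m k i, b) * \<phi> $ b)"
    by (intro sum.cong refl sum_digits_prod[OF m])
  also have "\<dots> = (\<Prod>k<n. \<Sum>a<m. \<Sum>b<m. cnj (\<chi> $ a) * A $$ (a, b) * \<phi> $ b)"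
    by (rule sum_digits_prod[OF m])
  also have "\<dots> = (\<Sum>a<m. \<Sum>b<m. cnj (\<chi> $ a) * A $$ (a, b) * \<phi> $ b) ^ n"
    by simp
  also have "\<dots> = (cinner \<chi> (A *\<^sub>v \<phi>)) ^ n"
    by (simp only: cinner_mult[OF A \<chi> \<phi>])
  finally show ?thesis .
qed

lemma tensor_sym:
  assumes m: "m \<ge> 1" and v: "v \<in> sym_subspace m n"
  shows "tensor_pow m n A *\<^sub>v v \<in> sym_subspace m n"
proof -
  have vc: "v \<in> carrier_vec (m ^ n)" using v unfolding sym_subspace_def by auto
  { fix \<sigma> i assume s: "\<sigma> permutes {..<n}" and i: "i < m ^ n"
    let ?p = "perm_idx m n \<sigma>"
    have bij: "bij_betw ?p {..<m ^ n} {..<m ^ n}" by (rule perm_idx_bij[OF m s])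
    have pl: "\<And>j. ?p j < m ^ n" using perm_idx_lt[OF m] by auto
    have tp: "\<And>j. j < m ^ n \<Longrightarrow> tensor_pow m n A $$ (?p i, ?p j) = tensor_pow m n A $$ (i, j)"
    proof -
      fix j assume j: "j < m ^ n"
      have "tensor_pow m n A $$ (?p i, ?p j) = (\<Prod>k<n. A $$ (digit m (\<sigma> k) i, digit m (\<sigma> k) j))"
        using i j pl by (simp add: tensor_pow_index digit_perm_idx[OF m s])
      also have "\<dots> = (\<Prod>k<n. A $$ (digit m k i, digit m k j))"
        using prod.permute[OF s, of "\<lambda>k. A $$ (digit m k i, digit m k j)"] by (simp add: comp_def)
      finally show "tensor_pow m n A $$ (?p i, ?p j) = tensor_pow m n A $$ (i, j)"
        using i j by (simp add: tensor_pow_index)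
    qed
    have "(tensor_pow m n A *\<^sub>v v) $ ?p i = (\<Sum>j<m ^ n. tensor_pow m n A $$ (?p i, j) * v $ j)"
      using vc pl by (simp add: mult_vec_index[of _ "m ^ n" "m ^ n"])
    also have "\<dots> = (\<Sum>j<m ^ n. tensor_pow m n A $$ (?p i, ?p j) * v $ ?p j)"
      by (rule sum.reindex_bij_betw[OF bij, symmetric])
    also have "\<dots> = (\<Sum>j<m ^ n. tensor_pow m n A $$ (i, j) * v $ j)"
      using v s tp unfolding sym_subspace_def by (intro sum.cong) auto
    also have "\<dots> = (tensor_pow m n A *\<^sub>v v) $ i"
      using vc i by (simp add: mult_vec_index[of _ "m ^ n" "m ^ n"])
    finally have "(tensor_pow m n A *\<^sub>v v) $ ?p i = (tensor_pow m n A *\<^sub>v v) $ i" .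
  }
  moreover have "tensor_pow m n A *\<^sub>v v \<in> carrier_vec (m ^ n)"
    by (rule mult_mat_vec_carrier[OF tensor_pow_carrier vc])
  ultimately show ?thesis unfolding sym_subspace_def by auto
qed

lemma tpv_sym:
  assumes m: "m \<ge> 1"
  shows "tpv m n \<phi> \<in> sym_subspace m n"
proof -
  { fix \<sigma> i assume s: "\<sigma> permutes {..<n}" and i: "i < m ^ n"
    have "tpv m n \<phi> $ perm_idx m n \<sigma> i = (\<Prod>k<n. \<phi> $ digit m (\<sigma> k) i)"
      using perm_idx_lt[OF m] by (simp add: tpv_index digit_perm_idx[OF m s])
    also have "\<dots> = (\<Prod>k<n. \<phi> $ digit m k i)"
      using prod.permute[OF s, of "\<lambda>k. \<phi> $ digit m k i"] by (simp add: comp_def)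
    finally have "tpv m n \<phi> $ perm_idx m n \<sigma> i = tpv m n \<phi> $ i" using i by (simp add: tpv_index)
  }
  then show ?thesis unfolding sym_subspace_def by auto
qed


definition qf :: "nat \<Rightarrow> (nat \<Rightarrow> nat \<Rightarrow> complex) \<Rightarrow> (nat \<Rightarrow> complex) \<Rightarrow> complex" where
  "qf N f v = (\<Sum>a<N. \<Sum>b<N. cnj (v a) * f a b * v b)"

definition psd_fun :: "nat \<Rightarrow> (nat \<Rightarrow> nat \<Rightarrow> complex) \<Rightarrow> bool" where
  "psd_fun N f \<longleftrightarrow> (\<forall>a<N. \<forall>b<N. f b a = cnj (f a b)) \<and> (\<forall>v. Im (qf N f v) = 0 \<and> Re (qf N f v) \<ge> 0)"

lemma sum_two_delta:
  fixes f :: "nat \<Rightarrow> complex"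
  assumes "i < N" "j < N" "i \<noteq> j"
  shows "(\<Sum>a<N. (if a = i then x else if a = j then y else 0) * f a) = x * f i + y * f j"
proof -
  have "(\<Sum>a<N. (if a = i then x else if a = j then y else 0) * f a) =
    (\<Sum>a<N. (if a = i then x * f i else 0) + (if a = j then y * f j else 0))"
    using assms by (intro sum.cong) auto
  also have "\<dots> = x * f i + y * f j" using assms by (simp add: sum.distrib)
  finally show ?thesis .
qed

lemma sum_one_delta:
  fixes f :: "nat \<Rightarrow> complex"
  assumes "i < N"
  shows "(\<Sum>a<N. (if a = i then x else 0) * f a) = x * f i"
proof -
  have "(\<Sum>a<N. (if a = i then x else 0) * f a) = (\<Sum>a<N. (if a = i then x * f i else 0))"
    by (intro sum.cong) auto
  then show ?thesis using assms by simp
qed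

lemma qf_two:
  assumes "i < N" "j < N" "i \<noteq> j"
  shows "qf N f (\<lambda>a. if a = i then x else if a = j then y else 0) =
    cnj x * x * f i i + cnj x * y * f i j + cnj y * x * f j i + cnj y * y * f j j"
proof -
  let ?v = "\<lambda>a. if a = i then x else if a = j then y else 0"
  have "qf N f ?v = (\<Sum>a<N. ?v a * (\<Sum>b<N. cnj (?v b) * f b a))"
    unfolding qf_def by (subst sum.swap) (simp add: sum_distrib_left sum_distrib_right ac_simps)
  also have "\<dots> = (\<Sum>a<N. ?v a * (cnj x * f i a + cnj y * f j a))"
  proof (intro sum.cong refl arg_cong2[where f="(*)"])
    fix a
    have "(\<Sum>b<N. cnj (?v b) * f b a) = (\<Sum>b<N. (if b = i then cnj x else if b = j then cnj y else 0) * f b a)"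
      by (intro sum.cong) auto
    then show "(\<Sum>b<N. cnj (?v b) * f b a) = cnj x * f i a + cnj y * f j a"
      using sum_two_delta[OF assms, of "cnj x" "cnj y" "\<lambda>b. f b a"] by simp
  qed
  also have "\<dots> = x * (cnj x * f i i + cnj y * f j i) + y * (cnj x * f i j + cnj y * f j j)"
    using sum_two_delta[OF assms, of x y "\<lambda>a. cnj x * f i a + cnj y * f j a"] by simp
  finally show ?thesis by (simp add: algebra_simps)
qed

lemma qf_one:
  assumes "i < N"
  shows "qf N f (\<lambda>a. if a = i then x else 0) = cnj x * x * f i i"
proof -
  let ?v = "\<lambda>a. if a = i then x else (0::complex)"
  have "qf N f ?v = (\<Sum>a<N. ?v a * (\<Sum>b<N. cnj (?v b) * f b a))"
    unfolding qf_def by (subst sum.swap) (simp add: sum_distrib_left sum_distrib_right ac_simps)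
  also have "\<dots> = (\<Sum>a<N. ?v a * (cnj x * f i a))"
  proof (intro sum.cong refl arg_cong2[where f="(*)"])
    fix a
    have "(\<Sum>b<N. cnj (?v b) * f b a) = (\<Sum>b<N. (if b = i then cnj x else 0) * f b a)"
      by (intro sum.cong) auto
    then show "(\<Sum>b<N. cnj (?v b) * f b a) = cnj x * f i a"
      using sum_one_delta[OF assms, of "cnj x" "\<lambda>b. f b a"] by simp
  qed
  also have "\<dots> = x * (cnj x * f i i)"
    using sum_one_delta[OF assms, of x "\<lambda>a. cnj x * f i a"] by simp
  finally show ?thesis by (simp add: algebra_simps)
qed

lemma positive_qf:
  assumes "positive_op N A"
  shows "Im (qf N (\<lambda>a b. A $$ (a,b)) v) = 0 \<and> Re (qf N (\<lambda>a b. A $$ (a,b)) v) \<ge> 0"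
proof -
  have A: "A \<in> carrier_mat N N" using assms unfolding positive_op_def by auto
  have vc: "vec N v \<in> carrier_vec N" by simp
  have "cinner (vec N v) (A *\<^sub>v vec N v) = qf N (\<lambda>a b. A $$ (a,b)) v"
    unfolding qf_def by (simp add: cinner_mult[OF A vc vc])
  then show ?thesis using assms vc unfolding positive_op_def by metis
qed

lemma psd_herm_from_qf:
  assumes q: "\<And>v. Im (qf N f v) = 0"
    and ij: "i < N" "j < N"
  shows "f j i = cnj (f i j)"
proof -
  have ii: "Im (f i i) = 0" using q[of "\<lambda>a. if a = i then 1 else 0"] qf_one[OF ij(1), of f 1] by simp
  have jj: "Im (f j j) = 0" using q[of "\<lambda>a. if a = j then 1 else 0"] qf_one[OF ij(2), of f 1] by simp
  show ?thesis
  proof (cases "i = j")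
    case True then show ?thesis using ii by (simp add: complex_eq_iff)
  next
    case False
    have 1: "Im (f i j + f j i) = 0"
      using q[of "\<lambda>a. if a = i then 1 else if a = j then 1 else 0"] qf_two[OF ij False, of f 1 1] ii jj by simp
    have 2: "Re (f i j - f j i) = 0"
      using q[of "\<lambda>a. if a = i then 1 else if a = j then \<i> else 0"] qf_two[OF ij False, of f 1 \<i>] ii jj
      by (simp add: algebra_simps)
    show ?thesis using 1 2 by (simp add: complex_eq_iff)
  qed
qed

lemma positive_psd_fun:
  assumes "positive_op N A"
  shows "psd_fun N (\<lambda>a b. A $$ (a,b))"
  unfolding psd_fun_def using positive_qf[OF assms] psd_herm_from_qf[of N "\<lambda>a b. A $$ (a,b)"] by blast

lemma qf_shift:
  assumes k: "k < N"
  shows "qf N f (\<lambda>a. v a + (if a = k then x else 0)) =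
    qf N f v + (\<Sum>a<N. cnj (v a) * f a k) * x + cnj x * (\<Sum>b<N. f k b * v b) + cnj x * x * f k k"
proof -
  let ?d = "\<lambda>a. if a = k then x else (0::complex)"
  have pt: "\<And>a b. cnj (v a + ?d a) * f a b * (v b + ?d b) =
     cnj (v a) * f a b * v b + cnj (v a) * f a b * ?d b + cnj (?d a) * f a b * v b + cnj (?d a) * f a b * ?d b"
    by (simp add: algebra_simps)
  have s2: "\<And>a. (\<Sum>b<N. cnj (v a) * f a b * ?d b) = cnj (v a) * f a k * x"
    using k by (simp add: if_distrib cong: if_cong)
  have "(\<Sum>a<N. \<Sum>b<N. cnj (?d a) * f a b * v b) = (\<Sum>a<N. if a = k then cnj x * (\<Sum>b<N. f k b * v b) else 0)"
    by (intro sum.cong) (auto simp: sum_distrib_left mult.assoc)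
  then have s3: "(\<Sum>a<N. \<Sum>b<N. cnj (?d a) * f a b * v b) = cnj x * (\<Sum>b<N. f k b * v b)"
    using k by simp
  have "(\<Sum>a<N. \<Sum>b<N. cnj (?d a) * f a b * ?d b) = (\<Sum>a<N. if a = k then cnj x * x * f k k else 0)"
    using k by (intro sum.cong) (auto simp: if_distrib cong: if_cong)
  then have s4: "(\<Sum>a<N. \<Sum>b<N. cnj (?d a) * f a b * ?d b) = cnj x * x * f k k"
    using k by simp
  have "qf N f (\<lambda>a. v a + ?d a) = (\<Sum>a<N. \<Sum>b<N.
     cnj (v a) * f a b * v b + cnj (v a) * f a b * ?d b + cnj (?d a) * f a b * v b + cnj (?d a) * f a b * ?d b)"
    unfolding qf_def by (intro sum.cong refl pt)
  also have "\<dots> = qf N f v + (\<Sum>a<N. \<Sum>b<N. cnj (v a) * f a b * ?d b)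
      + (\<Sum>a<N. \<Sum>b<N. cnj (?d a) * f a b * v b) + (\<Sum>a<N. \<Sum>b<N. cnj (?d a) * f a b * ?d b)"
    unfolding qf_def by (simp add: sum.distrib)
  also have "\<dots> = qf N f v + (\<Sum>a<N. cnj (v a) * f a k) * x + cnj x * (\<Sum>b<N. f k b * v b) + cnj x * x * f k k"
    using s2 s3 s4 by (simp add: sum_distrib_right)
  finally show ?thesis .
qed

lemma cholesky_aux:
  assumes "psd_fun N f" "\<forall>a<N. \<forall>b<N. (a < k \<or> b < k) \<longrightarrow> f a b = 0" "k \<le> N"
  shows "\<exists>w. \<forall>a<N. \<forall>b<N. f a b = (\<Sum>j\<in>{k..<N}. w j a * cnj (w j b))"
  using assms
proof (induction "N - k" arbitrary: k f)
  case 0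
  have kN: "k = N" using 0 by arith
  have "\<forall>a<N. \<forall>b<N. f a b = 0" using 0(3) kN by auto
  then show ?case using kN by simp
next
  case (Suc d)
  have kN: "k < N" and d: "d = N - Suc k" using Suc.hyps(2) by arith+
  have herm: "\<And>a b. a < N \<Longrightarrow> b < N \<Longrightarrow> f b a = cnj (f a b)"
    using Suc.prems(1) unfolding psd_fun_def by blast
  have qpos: "\<And>v. Im (qf N f v) = 0 \<and> Re (qf N f v) \<ge> 0"
    using Suc.prems(1) unfolding psd_fun_def by blast
  define r where "r = Re (f k k)"
  have fkk: "f k k = complex_of_real r" and r0: "r \<ge> 0"
  proof -
    have "Im (f k k) = 0" "Re (f k k) \<ge> 0"
      using qpos[of "\<lambda>a. if a = k then 1 else 0"] qf_one[OF kN, of f 1] by simp_all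
    then show "f k k = complex_of_real r" "r \<ge> 0" unfolding r_def by (simp_all add: complex_eq_iff)
  qed
  show ?case
  proof (cases "r = 0")
    case True
    have row: "f k b = 0" if b: "b < N" for b
    proof (rule ccontr)
      assume c0: "f k b \<noteq> 0"
      then have bk: "b \<noteq> k" using fkk True by auto
      define c where "c = f k b"
      define s where "s = (Re (f b b) + 1) / (2 * (cmod c)\<^sup>2)"
      define t where "t = - (complex_of_real s * c)"
      have cpos: "(cmod c)\<^sup>2 > 0" using c0 unfolding c_def by simp
      have q: "qf N f (\<lambda>a. if a = k then t else if a = b then 1 else 0) =
          cnj t * t * f k k + cnj t * 1 * f k b + cnj 1 * t * f b k + cnj 1 * 1 * f b b"
        by (rule qf_two[OF kN b bk[symmetric]])
      have fbk: "f b k = cnj c" using herm[OF kN b] unfolding c_def by simp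
      have fkb: "f k b = c" unfolding c_def by simp
      have "qf N f (\<lambda>a. if a = k then t else if a = b then 1 else 0) =
          cnj t * c + t * cnj c + f b b"
        using q fkk True fkb fbk by simp
      also have "\<dots> = - (2 * complex_of_real s * (c * cnj c)) + f b b"
        unfolding t_def by (simp add: algebra_simps)
      also have "\<dots> = - complex_of_real (2 * s * (cmod c)\<^sup>2) + f b b"
        using complex_norm_square[of c] by simp
      finally have e1: "Re (qf N f (\<lambda>a. if a = k then t else if a = b then 1 else 0)) =
          - (2 * s * (cmod c)\<^sup>2) + Re (f b b)" by simp
      have "2 * s * (cmod c)\<^sup>2 = Re (f b b) + 1" using cpos unfolding s_def by simp
      then have "Re (qf N f (\<lambda>a. if a = k then t else if a = b then 1 else 0)) = -1" using e1 by simp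
      then show False using qpos[of "\<lambda>a. if a = k then t else if a = b then 1 else 0"] by simp
    qed
    have col: "f b k = 0" if b: "b < N" for b
      using herm[OF kN b] row[OF b] by simp
    have z: "\<forall>a<N. \<forall>b<N. (a < Suc k \<or> b < Suc k) \<longrightarrow> f a b = 0"
      using Suc.prems(2) row col by (metis less_SucE)
    have ex: "\<exists>w. \<forall>a<N. \<forall>b<N. f a b = (\<Sum>j\<in>{Suc k..<N}. w j a * cnj (w j b))"
      by (rule Suc.hyps(1)[OF d Suc.prems(1) z]) (use kN in simp)
    obtain w where w: "\<forall>a<N. \<forall>b<N. f a b = (\<Sum>j\<in>{Suc k..<N}. w j a * cnj (w j b))"
      using ex by blast
    define w' where "w' = w(k := (\<lambda>_. 0))"
    have "\<forall>a<N. \<forall>b<N. f a b = (\<Sum>j\<in>{k..<N}. w' j a * cnj (w' j b))"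
    proof (intro allI impI)
      fix a b assume ab: "a < N" "b < N"
      have "(\<Sum>j\<in>{k..<N}. w' j a * cnj (w' j b)) = w' k a * cnj (w' k b) + (\<Sum>j\<in>{Suc k..<N}. w' j a * cnj (w' j b))"
        by (rule sum.atLeast_Suc_lessThan[OF kN])
      also have "\<dots> = (\<Sum>j\<in>{Suc k..<N}. w j a * cnj (w j b))"
        unfolding w'_def by (auto intro!: sum.cong)
      finally show "f a b = (\<Sum>j\<in>{k..<N}. w' j a * cnj (w' j b))" using w ab by simp
    qed
    then show ?thesis by blast
  next
    case False
    then have rpos: "r > 0" using r0 by simp
    define u where "u a = f a k / complex_of_real (sqrt r)" for a
    define f' where "f' a b = f a b - u a * cnj (u b)" for a b
    have uu: "u a * cnj (u b) = f a k * f k b / complex_of_real r" if "b < N" for a b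
    proof -
      have "cnj (f b k) = f k b" using herm[OF kN that] by simp
      moreover have "complex_of_real (sqrt r) * complex_of_real (sqrt r) = complex_of_real r"
        using r0 by (simp flip: of_real_mult)
      ultimately show ?thesis unfolding u_def by (simp add: field_simps)
    qed
    have psd': "psd_fun N f'"
    proof -
      have h': "\<forall>a<N. \<forall>b<N. f' b a = cnj (f' a b)"
      proof (intro allI impI)
        fix a b assume "a < N" "b < N"
        then show "f' b a = cnj (f' a b)" unfolding f'_def using herm[of a b] by simp
      qed
      have "qf N f' v = qf N f (\<lambda>a. v a + (if a = k then - (\<Sum>b<N. f k b * v b) / complex_of_real r else 0))" for v
      proof -
        define g where "g = (\<Sum>b<N. f k b * v b)"
        define al where "al = (\<Sum>a<N. cnj (v a) * f a k)"
        have "qf N f' v = (\<Sum>a<N. \<Sum>b<N. cnj (v a) * f a b * v b - cnj (v a) * (f a k * f k b / complex_of_real r) * v b)"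
          unfolding qf_def f'_def using uu by (intro sum.cong refl) (simp add: algebra_simps)
        also have "\<dots> = qf N f v - (\<Sum>a<N. \<Sum>b<N. cnj (v a) * (f a k * f k b / complex_of_real r) * v b)"
          unfolding qf_def by (simp only: sum_subtractf)
        also have "(\<Sum>a<N. \<Sum>b<N. cnj (v a) * (f a k * f k b / complex_of_real r) * v b) = al * g / complex_of_real r"
        proof -
          have "(\<Sum>a<N. \<Sum>b<N. cnj (v a) * (f a k * f k b / complex_of_real r) * v b) =
              (\<Sum>a<N. cnj (v a) * f a k * (\<Sum>b<N. f k b * v b) / complex_of_real r)"
            by (intro sum.cong refl) (simp add: sum_distrib_left sum_divide_distrib algebra_simps)
          also have "\<dots> = al * g / complex_of_real r"
            unfolding al_def g_def by (simp add: sum_distrib_right sum_divide_distrib)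
          finally show ?thesis .
        qed
        finally have 1: "qf N f' v = qf N f v - al * g / complex_of_real r" .
        have 2: "qf N f (\<lambda>a. v a + (if a = k then - g / complex_of_real r else 0)) =
            qf N f v + al * (- g / complex_of_real r) + cnj (- g / complex_of_real r) * g
            + cnj (- g / complex_of_real r) * (- g / complex_of_real r) * f k k"
          unfolding al_def g_def by (rule qf_shift[OF kN])
        have c: "cnj (- g / complex_of_real r) = - cnj g / complex_of_real r" by simp
        have 3: "cnj (- g / complex_of_real r) * g + cnj (- g / complex_of_real r) * (- g / complex_of_real r) * f k k = 0"
          unfolding c fkk using rpos by (simp add: field_simps)
        have "qf N f (\<lambda>a. v a + (if a = k then - g / complex_of_real r else 0)) = qf N f v - al * g / complex_of_real r"
          using 2 3 by (simp add: algebra_simps)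
        then show ?thesis unfolding g_def[symmetric] using 1 by simp
      qed
      then show ?thesis using h' qpos unfolding psd_fun_def by metis
    qed
    have z: "\<forall>a<N. \<forall>b<N. (a < Suc k \<or> b < Suc k) \<longrightarrow> f' a b = 0"
    proof (intro allI impI)
      fix a b assume ab: "a < N" "b < N" "a < Suc k \<or> b < Suc k"
      have sq: "complex_of_real (sqrt r) \<noteq> 0" using rpos by simp
      have sqr: "complex_of_real (sqrt r) * complex_of_real (sqrt r) = f k k"
        unfolding fkk using rpos by (simp flip: of_real_mult)
      show "f' a b = 0"
      proof (cases "a < k \<or> b < k")
        case True
        then have "f a b = 0" using Suc.prems(2) ab by auto
        moreover have "u a * cnj (u b) = 0"
          using True Suc.prems(2) ab kN unfolding u_def by auto
        ultimately show ?thesis unfolding f'_def by simp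
      next
        case False
        then have "a = k \<or> b = k" using ab(3) by auto
        then show ?thesis
        proof
          assume a: "a = k"
          have "u a * cnj (u b) = f k k * f k b / f k k"
            using uu[OF ab(2), of a] a fkk by simp
          also have "\<dots> = f k b" using rpos fkk by simp
          finally show ?thesis unfolding f'_def using a by simp
        next
          assume b: "b = k"
          have "u a * cnj (u b) = f a k * f k k / f k k"
            using uu[OF ab(2), of a] b fkk by simp
          also have "\<dots> = f a k" using rpos fkk by simp
          finally show ?thesis unfolding f'_def using b by simp
        qed
      qed
    qed
    have ex: "\<exists>w. \<forall>a<N. \<forall>b<N. f' a b = (\<Sum>j\<in>{Suc k..<N}. w j a * cnj (w j b))"
      by (rule Suc.hyps(1)[OF d psd' z]) (use kN in simp)
    obtain w where w: "\<forall>a<N. \<forall>b<N. f' a b = (\<Sum>j\<in>{Suc k..<N}. w j a * cnj (w j b))"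
      using ex by blast
    define w' where "w' = w(k := u)"
    have "\<forall>a<N. \<forall>b<N. f a b = (\<Sum>j\<in>{k..<N}. w' j a * cnj (w' j b))"
    proof (intro allI impI)
      fix a b assume ab: "a < N" "b < N"
      have "(\<Sum>j\<in>{k..<N}. w' j a * cnj (w' j b)) = w' k a * cnj (w' k b) + (\<Sum>j\<in>{Suc k..<N}. w' j a * cnj (w' j b))"
        by (rule sum.atLeast_Suc_lessThan[OF kN])
      also have "\<dots> = u a * cnj (u b) + (\<Sum>j\<in>{Suc k..<N}. w j a * cnj (w j b))"
        unfolding w'_def by (auto intro!: sum.cong)
      moreover have "f a b - u a * cnj (u b) = (\<Sum>j\<in>{Suc k..<N}. w j a * cnj (w j b))"
        using w ab unfolding f'_def by blast
      ultimately show "f a b = (\<Sum>j\<in>{k..<N}. w' j a * cnj (w' j b))" by (simp add: algebra_simps)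
    qed
    then show ?thesis by blast
  qed
qed

lemma psd_gram:
  assumes "positive_op m \<rho>"
  shows "\<exists>w. \<forall>a<m. \<forall>b<m. \<rho> $$ (a,b) = (\<Sum>j<m. w j a * cnj (w j b))"
  using cholesky_aux[OF positive_psd_fun[OF assms], of 0] by (simp add: atLeast0LessThan)


lemma tensor_gram:
  assumes m: "m \<ge> 1" and pos: "positive_op m \<rho>"
  shows "\<exists>X. (\<forall>g. X g \<in> carrier_vec (m ^ n)) \<and>
    (\<forall>B \<in> carrier_mat (m ^ n) (m ^ n). mtrace (tensor_pow m n \<rho> * B) =
       (\<Sum>g \<in> Pi\<^sub>E {..<n} (\<lambda>_. {..<m}). cinner (X g) (B *\<^sub>v X g)))"
proof -
  obtain w where w: "\<forall>a<m. \<forall>b<m. \<rho> $$ (a,b) = (\<Sum>j<m. w j a * cnj (w j b))"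
    using psd_gram[OF pos] by blast
  define X where "X g = vec (m ^ n) (\<lambda>I. \<Prod>k<n. w (g k) (digit m k I))" for g
  let ?G = "Pi\<^sub>E {..<n} (\<lambda>_. {..<m})"
  have Xc: "X g \<in> carrier_vec (m ^ n)" for g unfolding X_def by simp
  have ent: "tensor_pow m n \<rho> $$ (I,J) = (\<Sum>g\<in>?G. X g $ I * cnj (X g $ J))"
    if I: "I < m ^ n" and J: "J < m ^ n" for I J
  proof -
    have "tensor_pow m n \<rho> $$ (I,J) = (\<Prod>k<n. \<rho> $$ (digit m k I, digit m k J))"
      using I J by (simp add: tensor_pow_index)
    also have "\<dots> = (\<Prod>k<n. \<Sum>j<m. w j (digit m k I) * cnj (w j (digit m k J)))"
      using w digit_lt[OF m] by (intro prod.cong refl) auto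
    also have "\<dots> = (\<Sum>g\<in>?G. \<Prod>k<n. w (g k) (digit m k I) * cnj (w (g k) (digit m k J)))"
      by (rule prod_sum_PiE) auto
    also have "\<dots> = (\<Sum>g\<in>?G. X g $ I * cnj (X g $ J))"
      unfolding X_def using I J by (simp add: prod.distrib)
    finally show ?thesis .
  qed
  have tr: "mtrace (tensor_pow m n \<rho> * B) = (\<Sum>g\<in>?G. cinner (X g) (B *\<^sub>v X g))"
    if B: "B \<in> carrier_mat (m ^ n) (m ^ n)" for B
  proof -
    have "mtrace (tensor_pow m n \<rho> * B) = (\<Sum>I<m ^ n. \<Sum>J<m ^ n. tensor_pow m n \<rho> $$ (I,J) * B $$ (J,I))"
      using B by (intro mtrace_mult) auto
    also have "\<dots> = (\<Sum>I<m ^ n. \<Sum>J<m ^ n. \<Sum>g\<in>?G. X g $ I * cnj (X g $ J) * B $$ (J,I))"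
      using ent by (simp add: sum_distrib_right)
    also have "\<dots> = (\<Sum>I<m ^ n. \<Sum>g\<in>?G. \<Sum>J<m ^ n. X g $ I * cnj (X g $ J) * B $$ (J,I))"
      by (intro sum.cong refl sum.swap)
    also have "\<dots> = (\<Sum>g\<in>?G. \<Sum>I<m ^ n. \<Sum>J<m ^ n. X g $ I * cnj (X g $ J) * B $$ (J,I))"
      by (rule sum.swap)
    also have "\<dots> = (\<Sum>g\<in>?G. cinner (X g) (B *\<^sub>v X g))"
    proof (intro sum.cong refl)
      fix g
      have "cinner (X g) (B *\<^sub>v X g) = (\<Sum>J<m ^ n. \<Sum>I<m ^ n. cnj (X g $ J) * B $$ (J,I) * X g $ I)"
        by (rule cinner_mult[OF B Xc Xc])
      also have "\<dots> = (\<Sum>I<m ^ n. \<Sum>J<m ^ n. cnj (X g $ J) * B $$ (J,I) * X g $ I)"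
        by (rule sum.swap[of "\<lambda>J I. cnj (X g $ J) * B $$ (J,I) * X g $ I"])
      also have "\<dots> = (\<Sum>I<m ^ n. \<Sum>J<m ^ n. X g $ I * cnj (X g $ J) * B $$ (J,I))"
        by (simp add: ac_simps)
      finally show "(\<Sum>I<m ^ n. \<Sum>J<m ^ n. X g $ I * cnj (X g $ J) * B $$ (J,I)) = cinner (X g) (B *\<^sub>v X g)"
        by simp
    qed
    finally show ?thesis .
  qed
  show ?thesis using Xc tr by blast
qed

lemma cinner_self_real:
  assumes v: "v \<in> carrier_vec N"
  shows "cinner v v = complex_of_real (\<Sum>i<N. (cmod (v $ i))\<^sup>2)"
proof -
  have "cinner v v = (\<Sum>i<N. cnj (v $ i) * v $ i)" by (rule cinner_def2[OF v])
  also have "\<dots> = (\<Sum>i<N. complex_of_real ((cmod (v $ i))\<^sup>2))"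
    by (intro sum.cong refl) (simp only: complex_norm_square mult.commute)
  also have "\<dots> = complex_of_real (\<Sum>i<N. (cmod (v $ i))\<^sup>2)" by (simp only: of_real_sum)
  finally show ?thesis .
qed

lemma cinner_self_nonneg: "v \<in> carrier_vec N \<Longrightarrow> Im (cinner v v) = 0 \<and> Re (cinner v v) \<ge> 0"
  by (simp only: cinner_self_real Re_complex_of_real Im_complex_of_real) (simp add: sum_nonneg)

lemma cinner_self_zero: "v \<in> carrier_vec N \<Longrightarrow> cinner v v = 0 \<Longrightarrow> v = 0\<^sub>v N"
proof -
  assume v: "v \<in> carrier_vec N" and z: "cinner v v = 0"
  then have "complex_of_real (\<Sum>i<N. (cmod (v $ i))\<^sup>2) = 0" by (simp only: cinner_self_real)
  then have "(\<Sum>i<N. (cmod (v $ i))\<^sup>2) = 0" by (rule of_real_eq_0_iff[THEN iffD1])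
  then have "\<forall>i\<in>{..<N}. (cmod (v $ i))\<^sup>2 = 0" by (subst sum_nonneg_eq_0_iff[symmetric]) auto
  then show "v = 0\<^sub>v N" using v by (intro eq_vecI) auto
qed

lemma cinner_cnj: "x \<in> carrier_vec N \<Longrightarrow> y \<in> carrier_vec N \<Longrightarrow> cinner x y = cnj (cinner y x)"
  by (simp add: cinner_def2 mult.commute)

lemma cinner_minus: "x \<in> carrier_vec N \<Longrightarrow> y \<in> carrier_vec N \<Longrightarrow> z \<in> carrier_vec N \<Longrightarrow>
  cinner x (y - z) = cinner x y - cinner x z"
  by (simp add: cinner_def2 algebra_simps sum_subtractf)

lemma mat_eq_by_vec:
  fixes A B :: "complex mat"
  assumes A: "A \<in> carrier_mat N N" and B: "B \<in> carrier_mat N N"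
    and eq: "\<And>v. v \<in> carrier_vec N \<Longrightarrow> A *\<^sub>v v = B *\<^sub>v v"
  shows "A = B"
proof (rule eq_matI)
  fix i j assume i: "i < dim_row B" and j: "j < dim_col B"
  have ij: "i < N" "j < N" using i j B by auto
  have ev: "(C *\<^sub>v unit_vec N j) $ i = C $$ (i,j)" if C: "C \<in> carrier_mat N N" for C :: "complex mat"
  proof -
    have "(C *\<^sub>v unit_vec N j) $ i = (\<Sum>k<N. C $$ (i,k) * unit_vec N j $ k)"
      by (rule mult_vec_index[OF C]) (use ij in auto)
    also have "\<dots> = (\<Sum>k<N. (if k = j then C $$ (i,j) else 0))"
      by (intro sum.cong) (auto simp: unit_vec_def)
    also have "\<dots> = C $$ (i,j)" using ij by simp
    finally show ?thesis .
  qed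
  have "(A *\<^sub>v unit_vec N j) $ i = (B *\<^sub>v unit_vec N j) $ i" using eq[of "unit_vec N j"] by simp
  moreover note ev[OF A] ev[OF B]
  ultimately show "A $$ (i,j) = B $$ (i,j)" by simp
qed (use A B in auto)

context
  fixes N :: nat and K :: "complex vec set" and P :: "complex mat"
  assumes proj: "is_orth_proj N K P"
begin

lemma proj_carrier: "P \<in> carrier_mat N N"
  using proj unfolding is_orth_proj_def by auto

lemma proj_range: "v \<in> carrier_vec N \<Longrightarrow> P *\<^sub>v v \<in> K"
  using proj unfolding is_orth_proj_def by auto

lemma proj_K_carrier: "v \<in> K \<Longrightarrow> v \<in> carrier_vec N"
  using proj proj_carrier unfolding is_orth_proj_def by (auto intro: mult_mat_vec_carrier)

lemma proj_fix: "v \<in> K \<Longrightarrow> P *\<^sub>v v = v"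
proof -
  assume "v \<in> K"
  then obtain x where x: "x \<in> carrier_vec N" "v = P *\<^sub>v x" using proj unfolding is_orth_proj_def by auto
  have "P *\<^sub>v v = (P * P) *\<^sub>v x" using x proj_carrier by simp
  also have "P * P = P" using proj unfolding is_orth_proj_def by auto
  finally show ?thesis using x by simp
qed

lemma proj_adj: "x \<in> carrier_vec N \<Longrightarrow> y \<in> carrier_vec N \<Longrightarrow> cinner x (P *\<^sub>v y) = cinner (P *\<^sub>v x) y"
  using cinner_adj[OF proj_carrier] proj unfolding is_orth_proj_def by metis

lemma proj_herm: "i < N \<Longrightarrow> j < N \<Longrightarrow> P $$ (j,i) = cnj (P $$ (i,j))"
proof -
  assume ij: "i < N" "j < N"
  have "adj P $$ (j,i) = cnj (P $$ (i,j))" using ij proj_carrier by (simp add: adj_index)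
  then show ?thesis using proj unfolding is_orth_proj_def by simp
qed

lemma proj_positive: "positive_op N P"
proof -
  { fix v :: "complex vec" assume v: "v \<in> carrier_vec N"
    have Pv: "P *\<^sub>v v \<in> carrier_vec N" using v proj_carrier by simp
    have "cinner v (P *\<^sub>v v) = cinner v (P *\<^sub>v (P *\<^sub>v v))"
      using proj_fix[OF proj_range[OF v]] by simp
    also have "\<dots> = cinner (P *\<^sub>v v) (P *\<^sub>v v)" using proj_adj[OF v Pv] by simp
    finally have "Im (cinner v (P *\<^sub>v v)) = 0 \<and> Re (cinner v (P *\<^sub>v v)) \<ge> 0"
      using cinner_self_nonneg[OF Pv] by simp }
  then show ?thesis unfolding positive_op_def using proj_carrier by auto
qed

end


lemma mult_index: "X \<in> carrier_mat N K \<Longrightarrow> Y \<in> carrier_mat K L \<Longrightarrow> i < N \<Longrightarrow> j < L \<Longrightarrow>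
  (X * Y) $$ (i,j) = (\<Sum>k<K. X $$ (i,k) * Y $$ (k,j))"
  by (auto simp: scalar_prod_def atLeast0LessThan)

lemma mult_unit: "C \<in> carrier_mat N N \<Longrightarrow> c < N \<Longrightarrow> i < N \<Longrightarrow> (C *\<^sub>v unit_vec N c) $ i = (C $$ (i,c) :: complex)"
proof -
  assume C: "C \<in> carrier_mat N N" and c: "c < N" and i: "i < N"
  have "(C *\<^sub>v unit_vec N c) $ i = (\<Sum>k<N. C $$ (i,k) * unit_vec N c $ k)"
    by (rule mult_vec_index[OF C _ i]) simp
  also have "\<dots> = (\<Sum>k<N. (if k = c then C $$ (i,c) else 0))"
    by (intro sum.cong) (auto simp: unit_vec_def)
  also have "\<dots> = C $$ (i,c)" using c by simp
  finally show ?thesis .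
qed

lemma trace_comm:
  fixes X Y :: "complex mat"
  assumes "X \<in> carrier_mat N N" "Y \<in> carrier_mat N N"
  shows "mtrace (X * Y) = mtrace (Y * X)"
proof -
  have "mtrace (X * Y) = (\<Sum>i<N. \<Sum>j<N. X $$ (i,j) * Y $$ (j,i))" by (rule mtrace_mult[OF assms])
  also have "\<dots> = (\<Sum>j<N. \<Sum>i<N. X $$ (i,j) * Y $$ (j,i))" by (rule sum.swap)
  also have "\<dots> = mtrace (Y * X)" using assms by (simp add: mtrace_mult mult.commute)
  finally show ?thesis .
qed

lemma trace_expand:
  fixes A P1 Q P2 :: "complex mat"
  assumes A: "A \<in> carrier_mat N N" and P1: "P1 \<in> carrier_mat N N" and Q: "Q \<in> carrier_mat N N"
    and P2: "P2 \<in> carrier_mat N N" and herm: "\<And>i j. i < N \<Longrightarrow> j < N \<Longrightarrow> P2 $$ (j,i) = cnj (P2 $$ (i,j))"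
  shows "mtrace (A * (P1 * Q * P2)) =
    (\<Sum>c<N. \<Sum>d<N. Q $$ (c,d) * cinner (P2 *\<^sub>v unit_vec N d) (A *\<^sub>v (P1 *\<^sub>v unit_vec N c)))"
proof -
  have "mtrace (A * (P1 * Q * P2)) = mtrace ((A * (P1 * Q)) * P2)"
    using A P1 Q P2 by (simp add: assoc_mult_mat[of _ N N _ N _ N])
  also have "\<dots> = mtrace (P2 * (A * (P1 * Q)))"
    by (rule trace_comm) (use A P1 Q P2 in auto)
  also have "P2 * (A * (P1 * Q)) = (P2 * (A * P1)) * Q"
    using A P1 Q P2 by (simp add: assoc_mult_mat[of _ N N _ N _ N])
  also have "mtrace \<dots> = mtrace (Q * (P2 * (A * P1)))"
    by (rule trace_comm) (use A P1 Q P2 in auto)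
  also have "\<dots> = (\<Sum>c<N. \<Sum>d<N. Q $$ (c,d) * (P2 * (A * P1)) $$ (d,c))"
    by (rule mtrace_mult) (use A P1 Q P2 in auto)
  also have "\<dots> = (\<Sum>c<N. \<Sum>d<N. Q $$ (c,d) * cinner (P2 *\<^sub>v unit_vec N d) (A *\<^sub>v (P1 *\<^sub>v unit_vec N c)))"
  proof (intro sum.cong refl arg_cong2[where f="(*)"])
    fix c d assume c: "c \<in> {..<N}" and d: "d \<in> {..<N}"
    have "(P2 * (A * P1)) $$ (d,c) = (\<Sum>I<N. P2 $$ (d,I) * (A * P1) $$ (I,c))"
      by (rule mult_index) (use A P1 P2 c d in auto)
    also have "\<dots> = (\<Sum>I<N. cnj ((P2 *\<^sub>v unit_vec N d) $ I) * (A *\<^sub>v (P1 *\<^sub>v unit_vec N c)) $ I)"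
    proof (intro sum.cong refl arg_cong2[where f="(*)"])
      fix I assume I: "I \<in> {..<N}"
      show "P2 $$ (d,I) = cnj ((P2 *\<^sub>v unit_vec N d) $ I)"
        using mult_unit[OF P2, of d I] herm[of I d] I d by simp
      have "A *\<^sub>v (P1 *\<^sub>v unit_vec N c) = (A * P1) *\<^sub>v unit_vec N c"
        using A P1 by simp
      then show "(A * P1) $$ (I,c) = (A *\<^sub>v (P1 *\<^sub>v unit_vec N c)) $ I"
        using mult_unit[of "A * P1" N c I] A P1 I c by simp
    qed
    also have "\<dots> = cinner (P2 *\<^sub>v unit_vec N d) (A *\<^sub>v (P1 *\<^sub>v unit_vec N c))"
      using P2 by (simp add: cinner_def2[of _ N])
    finally show "(P2 * (A * P1)) $$ (d,c) = cinner (P2 *\<^sub>v unit_vec N d) (A *\<^sub>v (P1 *\<^sub>v unit_vec N c))" .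
  qed
  finally show ?thesis .
qed

lemma mtrace_outer_left:
  assumes B: "B \<in> carrier_mat N N" and v: "v \<in> carrier_vec N" and w: "w \<in> carrier_vec N"
  shows "mtrace (outer v w * B) = cinner w (B *\<^sub>v v)"
proof -
  have "mtrace (outer v w * B) = mtrace (B * outer v w)"
    by (rule trace_comm) (use B v w in auto)
  then show ?thesis using mtrace_outer[OF B v w] by simp
qed

lemma cinner_add_left: "x \<in> carrier_vec N \<Longrightarrow> y \<in> carrier_vec N \<Longrightarrow> cinner (x + y) z = cinner x z + cinner y z"
  by (simp add: cinner_def2[of _ N] algebra_simps sum.distrib)

lemma cinner_add_right: "x \<in> carrier_vec N \<Longrightarrow> y \<in> carrier_vec N \<Longrightarrow> z \<in> carrier_vec N \<Longrightarrow>
  cinner x (y + z) = cinner x y + cinner x z"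
  by (simp add: cinner_def2[of _ N] algebra_simps sum.distrib)

lemma vec_sub_add: "v \<in> carrier_vec N \<Longrightarrow> w \<in> carrier_vec N \<Longrightarrow> v - w + w = (v :: complex vec)"
  by (intro eq_vecI) auto

lemma vec_add_sub: "v \<in> carrier_vec N \<Longrightarrow> w \<in> carrier_vec N \<Longrightarrow> w + (v - w) = (v :: complex vec)"
  by (intro eq_vecI) auto

locale qsetup =
  fixes m n :: nat and Pi_p Pi_m :: "complex mat"
  assumes m: "m \<ge> 1"
    and Pi_p: "is_orth_proj (m ^ n) (sym_subspace m n) Pi_p"
    and Pi_m: "is_orth_proj (m ^ n) (asym_subspace m n) Pi_m"
begin

abbreviation "NN \<equiv> m ^ n"

lemma Pp_carrier[simp]: "Pi_p \<in> carrier_mat NN NN" using proj_carrier[OF Pi_p] .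
lemma Pm_carrier[simp]: "Pi_m \<in> carrier_mat NN NN" using proj_carrier[OF Pi_m] .

lemma Pp_vec[simp]: "v \<in> carrier_vec NN \<Longrightarrow> Pi_p *\<^sub>v v \<in> carrier_vec NN"
  by (rule mult_mat_vec_carrier[OF Pp_carrier])
lemma Pm_vec[simp]: "v \<in> carrier_vec NN \<Longrightarrow> Pi_m *\<^sub>v v \<in> carrier_vec NN"
  by (rule mult_mat_vec_carrier[OF Pm_carrier])

lemma sym_carrier: "v \<in> sym_subspace m n \<Longrightarrow> v \<in> carrier_vec NN"
  unfolding sym_subspace_def by auto

lemma asym_orth: "x \<in> sym_subspace m n \<Longrightarrow> y \<in> asym_subspace m n \<Longrightarrow> cinner x y = 0"
  unfolding asym_subspace_def orth_compl_def by auto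

lemma asym_orth': "x \<in> sym_subspace m n \<Longrightarrow> y \<in> asym_subspace m n \<Longrightarrow> cinner y x = 0"
  using asym_orth cinner_cnj[of y NN x] sym_carrier proj_K_carrier[OF Pi_m] by auto

lemma Pm_eq: assumes v: "v \<in> carrier_vec NN" shows "Pi_m *\<^sub>v v = v - Pi_p *\<^sub>v v"
proof -
  define x where "x = v - Pi_p *\<^sub>v v"
  have Pv: "Pi_p *\<^sub>v v \<in> sym_subspace m n" by (rule proj_range[OF Pi_p v])
  have Pvc: "Pi_p *\<^sub>v v \<in> carrier_vec NN" using v by simp
  have xc: "x \<in> carrier_vec NN" unfolding x_def using v by simp
  have "x \<in> asym_subspace m n"
    unfolding asym_subspace_def orth_compl_def
  proof (intro CollectI conjI ballI xc)
    fix w assume w: "w \<in> sym_subspace m n"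
    have wc: "w \<in> carrier_vec NN" using sym_carrier[OF w] .
    have "cinner w x = cinner w v - cinner w (Pi_p *\<^sub>v v)" unfolding x_def by (rule cinner_minus[OF wc v Pvc])
    also have "cinner w (Pi_p *\<^sub>v v) = cinner (Pi_p *\<^sub>v w) v" by (rule proj_adj[OF Pi_p wc v])
    also have "Pi_p *\<^sub>v w = w" by (rule proj_fix[OF Pi_p w])
    finally show "cinner w x = 0" by simp
  qed
  then have 1: "Pi_m *\<^sub>v x = x" by (rule proj_fix[OF Pi_m])
  have z: "Pi_m *\<^sub>v (Pi_p *\<^sub>v v) = 0\<^sub>v NN"
  proof -
    define z where "z = Pi_m *\<^sub>v (Pi_p *\<^sub>v v)"
    have zc: "z \<in> carrier_vec NN" unfolding z_def using v by simp
    have "cinner z z = cinner (Pi_m *\<^sub>v z) (Pi_p *\<^sub>v v)" unfolding z_def[symmetric]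
      by (subst (2) z_def) (rule proj_adj[OF Pi_m zc Pvc])
    also have "\<dots> = 0" using asym_orth'[OF Pv proj_range[OF Pi_m zc]] .
    finally show ?thesis using cinner_self_zero[OF zc] unfolding z_def by simp
  qed
  have "Pi_m *\<^sub>v v = Pi_m *\<^sub>v (x + Pi_p *\<^sub>v v)" unfolding x_def using vec_sub_add[OF v Pvc] by simp
  also have "\<dots> = Pi_m *\<^sub>v x + Pi_m *\<^sub>v (Pi_p *\<^sub>v v)"
    by (rule mult_add_distrib_mat_vec[OF Pm_carrier xc Pvc])
  also have "\<dots> = x" using 1 z xc by simp
  finally show ?thesis unfolding x_def .
qed

lemma Pp_Pm_one: "Pi_p + Pi_m = 1\<^sub>m NN"
proof (rule mat_eq_by_vec[of _ NN])
  fix v :: "complex vec" assume v: "v \<in> carrier_vec NN"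
  have "(Pi_p + Pi_m) *\<^sub>v v = Pi_p *\<^sub>v v + Pi_m *\<^sub>v v"
    by (rule add_mult_distrib_mat_vec[OF Pp_carrier Pm_carrier v])
  also have "\<dots> = v" using Pm_eq[OF v] vec_add_sub[OF v Pp_vec[OF v]] by simp
  finally show "(Pi_p + Pi_m) *\<^sub>v v = 1\<^sub>m NN *\<^sub>v v" using v by simp
qed auto

lemma povm: "povm2 NN Pi_p Pi_m"
  unfolding povm2_def using proj_positive[OF Pi_p] proj_positive[OF Pi_m] Pp_Pm_one by auto

end


lemma adj_tensor:
  assumes herm: "\<And>i j. i < m \<Longrightarrow> j < m \<Longrightarrow> \<rho> $$ (j,i) = cnj (\<rho> $$ (i,j))" and m: "m \<ge> 1"
  shows "adj (tensor_pow m n \<rho>) = tensor_pow m n \<rho>"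
proof (rule eq_matI)
  fix i j assume "i < dim_row (tensor_pow m n \<rho>)" "j < dim_col (tensor_pow m n \<rho>)"
  then have ij: "i < m ^ n" "j < m ^ n" by (auto simp: tensor_pow_def)
  have "adj (tensor_pow m n \<rho>) $$ (i,j) = cnj (\<Prod>k<n. \<rho> $$ (digit m k j, digit m k i))"
    using ij by (simp add: adj_index[of _ "m ^ n" "m ^ n"] tensor_pow_index)
  also have "\<dots> = (\<Prod>k<n. \<rho> $$ (digit m k i, digit m k j))"
  proof -
    have "cnj (\<Prod>k<n. \<rho> $$ (digit m k j, digit m k i)) = (\<Prod>k<n. cnj (\<rho> $$ (digit m k j, digit m k i)))"
      by simp
    also have "\<dots> = (\<Prod>k<n. \<rho> $$ (digit m k i, digit m k j))"
      by (intro prod.cong refl) (use herm[of "digit m _ j" "digit m _ i"] digit_lt[OF m] in auto)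
    finally show ?thesis .
  qed
  finally show "adj (tensor_pow m n \<rho>) $$ (i,j) = tensor_pow m n \<rho> $$ (i,j)" using ij by (simp add: tensor_pow_index)
qed (auto simp: adj_def tensor_pow_def)

lemma density_herm: "\<rho> \<in> density_ops m \<Longrightarrow> i < m \<Longrightarrow> j < m \<Longrightarrow> \<rho> $$ (j,i) = cnj (\<rho> $$ (i,j))"
  unfolding density_ops_def using positive_psd_fun unfolding psd_fun_def by blast

lemma density_carrier: "\<rho> \<in> density_ops m \<Longrightarrow> \<rho> \<in> carrier_mat m m"
  unfolding density_ops_def positive_op_def by auto

context qsetup
begin

lemma Ppe_sym: "c < NN \<Longrightarrow> Pi_p *\<^sub>v unit_vec NN c \<in> sym_subspace m n"
  by (rule proj_range[OF Pi_p]) simp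

lemma Pme_asym: "c < NN \<Longrightarrow> Pi_m *\<^sub>v unit_vec NN c \<in> asym_subspace m n"
  by (rule proj_range[OF Pi_m]) simp

lemma unit_split: "c < NN \<Longrightarrow> unit_vec NN c = Pi_p *\<^sub>v unit_vec NN c + Pi_m *\<^sub>v unit_vec NN c"
  using Pm_eq[of "unit_vec NN c"] vec_add_sub[of "unit_vec NN c" NN "Pi_p *\<^sub>v unit_vec NN c"] by simp

lemma trace_sym_expand:
  assumes A: "A \<in> carrier_mat m m" and Q: "Q \<in> carrier_mat NN NN"
  shows "mtrace (tensor_pow m n A * (Pi_p * Q * Pi_p)) =
    (\<Sum>c<NN. \<Sum>d<NN. Q $$ (c,d) * cinner (Pi_p *\<^sub>v unit_vec NN d) (tensor_pow m n A *\<^sub>v (Pi_p *\<^sub>v unit_vec NN c)))"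
  by (rule trace_expand[OF tensor_pow_carrier Pp_carrier Q Pp_carrier proj_herm[OF Pi_p]])

lemma trace_split:
  assumes \<rho>: "\<rho> \<in> density_ops m" and Q: "Q \<in> carrier_mat NN NN"
  shows "mtrace (tensor_pow m n \<rho> * Q) =
    mtrace (tensor_pow m n \<rho> * (Pi_p * Q * Pi_p)) + mtrace (tensor_pow m n \<rho> * (Pi_m * Q * Pi_m))"
proof -
  let ?T = "tensor_pow m n \<rho>"
  let ?e = "unit_vec NN"
  have T: "?T \<in> carrier_mat NN NN" by simp
  have adjT: "adj ?T = ?T" by (rule adj_tensor[OF density_herm[OF \<rho>] m])
  have "mtrace (?T * Q) = mtrace (?T * (1\<^sub>m NN * Q * 1\<^sub>m NN))" using Q by simp
  also have "\<dots> = (\<Sum>c<NN. \<Sum>d<NN. Q $$ (c,d) * cinner (1\<^sub>m NN *\<^sub>v ?e d) (?T *\<^sub>v (1\<^sub>m NN *\<^sub>v ?e c)))"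
    by (rule trace_expand) (use Q in auto)
  also have "\<dots> = (\<Sum>c<NN. \<Sum>d<NN. Q $$ (c,d) * cinner (Pi_p *\<^sub>v ?e d) (?T *\<^sub>v (Pi_p *\<^sub>v ?e c))
      + Q $$ (c,d) * cinner (Pi_m *\<^sub>v ?e d) (?T *\<^sub>v (Pi_m *\<^sub>v ?e c)))"
  proof (intro sum.cong refl)
    fix c d assume c: "c \<in> {..<NN}" and d: "d \<in> {..<NN}"
    let ?pc = "Pi_p *\<^sub>v ?e c" and ?mc = "Pi_m *\<^sub>v ?e c" and ?pd = "Pi_p *\<^sub>v ?e d" and ?md = "Pi_m *\<^sub>v ?e d"
    have cc: "?pc \<in> carrier_vec NN" "?mc \<in> carrier_vec NN" "?pd \<in> carrier_vec NN" "?md \<in> carrier_vec NN"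
      by auto
    have Tc: "?T *\<^sub>v ?pc \<in> carrier_vec NN" "?T *\<^sub>v ?mc \<in> carrier_vec NN"
      using mult_mat_vec_carrier[OF T cc(1)] mult_mat_vec_carrier[OF T cc(2)] by auto
    have z1: "cinner ?md (?T *\<^sub>v ?pc) = 0"
      by (rule asym_orth'[OF tensor_sym[OF m Ppe_sym] Pme_asym]) (use c d in auto)
    have "cinner ?pd (?T *\<^sub>v ?mc) = cinner (adj ?T *\<^sub>v ?pd) ?mc"
      by (rule cinner_adj[OF T cc(3) cc(2)])
    also have "\<dots> = 0" unfolding adjT
      by (rule asym_orth[OF tensor_sym[OF m Ppe_sym] Pme_asym]) (use c d in auto)
    finally have z2: "cinner ?pd (?T *\<^sub>v ?mc) = 0" .
    have ed: "?e d = ?pd + ?md" using unit_split d by blast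
    have ec: "?e c = ?pc + ?mc" using unit_split c by blast
    have "cinner (1\<^sub>m NN *\<^sub>v ?e d) (?T *\<^sub>v (1\<^sub>m NN *\<^sub>v ?e c)) = cinner (?e d) (?T *\<^sub>v ?e c)"
      by simp
    also have "\<dots> = cinner (?pd + ?md) (?T *\<^sub>v (?pc + ?mc))"
      by (rule arg_cong2[where f="\<lambda>x y. cinner x (?T *\<^sub>v y)"]) (rule ed, rule ec)
    also have "\<dots> = cinner (?pd + ?md) (?T *\<^sub>v ?pc + ?T *\<^sub>v ?mc)"
      using mult_add_distrib_mat_vec[OF T cc(1) cc(2)] by simp
    also have "\<dots> = cinner ?pd (?T *\<^sub>v ?pc) + cinner ?md (?T *\<^sub>v ?pc) + (cinner ?pd (?T *\<^sub>v ?mc) + cinner ?md (?T *\<^sub>v ?mc))"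
      using cc Tc by (simp add: cinner_add_left[of _ NN] cinner_add_right[of _ NN])
    also have "\<dots> = cinner ?pd (?T *\<^sub>v ?pc) + cinner ?md (?T *\<^sub>v ?mc)" using z1 z2 by simp
    finally show "Q $$ (c,d) * cinner (1\<^sub>m NN *\<^sub>v ?e d) (?T *\<^sub>v (1\<^sub>m NN *\<^sub>v ?e c)) =
      Q $$ (c,d) * cinner ?pd (?T *\<^sub>v ?pc) + Q $$ (c,d) * cinner ?md (?T *\<^sub>v ?mc)"
      by (simp add: algebra_simps)
  qed
  also have "\<dots> = (\<Sum>c<NN. \<Sum>d<NN. Q $$ (c,d) * cinner (Pi_p *\<^sub>v ?e d) (?T *\<^sub>v (Pi_p *\<^sub>v ?e c))) +
      (\<Sum>c<NN. \<Sum>d<NN. Q $$ (c,d) * cinner (Pi_m *\<^sub>v ?e d) (?T *\<^sub>v (Pi_m *\<^sub>v ?e c)))"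
    by (simp add: sum.distrib)
  also have "\<dots> = mtrace (?T * (Pi_p * Q * Pi_p)) + mtrace (?T * (Pi_m * Q * Pi_m))"
    using trace_expand[OF T Pp_carrier Q Pp_carrier proj_herm[OF Pi_p]]
      trace_expand[OF T Pm_carrier Q Pm_carrier proj_herm[OF Pi_m]] by simp
  finally show ?thesis .
qed

lemma sand_carrier: "Q \<in> carrier_mat NN NN \<Longrightarrow> Pi_m * Q * Pi_m \<in> carrier_mat NN NN"
  "Q \<in> carrier_mat NN NN \<Longrightarrow> Pi_p * Q * Pi_p \<in> carrier_mat NN NN"
  by (rule mult_carrier_mat[OF mult_carrier_mat[OF Pm_carrier] Pm_carrier], assumption)
     (rule mult_carrier_mat[OF mult_carrier_mat[OF Pp_carrier] Pp_carrier], assumption)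

lemma sandwich_vec:
  assumes Q: "Q \<in> carrier_mat NN NN" and x: "x \<in> carrier_vec NN"
  shows "cinner x ((Pi_m * Q * Pi_m) *\<^sub>v x) = cinner (Pi_m *\<^sub>v x) (Q *\<^sub>v (Pi_m *\<^sub>v x))"
proof -
  have PQ: "Pi_m * Q \<in> carrier_mat NN NN" by (rule mult_carrier_mat[OF Pm_carrier Q])
  have "(Pi_m * Q * Pi_m) *\<^sub>v x = (Pi_m * Q) *\<^sub>v (Pi_m *\<^sub>v x)"
    by (rule assoc_mult_mat_vec[OF PQ Pm_carrier x])
  also have "\<dots> = Pi_m *\<^sub>v (Q *\<^sub>v (Pi_m *\<^sub>v x))"
    by (rule assoc_mult_mat_vec[OF Pm_carrier Q]) (use x in simp)
  finally have "(Pi_m * Q * Pi_m) *\<^sub>v x = Pi_m *\<^sub>v (Q *\<^sub>v (Pi_m *\<^sub>v x))" .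
  then show ?thesis using proj_adj[OF Pi_m x, of "Q *\<^sub>v (Pi_m *\<^sub>v x)"] Q x by simp
qed

lemma trace_pos:
  assumes \<rho>: "\<rho> \<in> density_ops m" and Q: "positive_op NN Q"
  shows "Re (mtrace (tensor_pow m n \<rho> * Q)) \<ge> 0" and "Re (mtrace (tensor_pow m n \<rho> * (Pi_m * Q * Pi_m))) \<ge> 0"
proof -
  have Qc: "Q \<in> carrier_mat NN NN" using Q unfolding positive_op_def by auto
  have pos: "positive_op m \<rho>" using \<rho> unfolding density_ops_def by auto
  obtain X where Xc: "\<And>g. X g \<in> carrier_vec NN" and
    tr: "\<And>B. B \<in> carrier_mat NN NN \<Longrightarrow> mtrace (tensor_pow m n \<rho> * B) =
       (\<Sum>g \<in> Pi\<^sub>E {..<n} (\<lambda>_. {..<m}). cinner (X g) (B *\<^sub>v X g))"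
    using tensor_gram[OF m pos, of n] by blast
  have qp: "Re (cinner v (Q *\<^sub>v v)) \<ge> 0" if "v \<in> carrier_vec NN" for v
    using Q that unfolding positive_op_def by auto
  show "Re (mtrace (tensor_pow m n \<rho> * Q)) \<ge> 0"
    unfolding tr[OF Qc] Re_sum using qp Xc by (intro sum_nonneg) auto
  have "Re (mtrace (tensor_pow m n \<rho> * (Pi_m * Q * Pi_m))) =
      (\<Sum>g \<in> Pi\<^sub>E {..<n} (\<lambda>_. {..<m}). Re (cinner (Pi_m *\<^sub>v X g) (Q *\<^sub>v (Pi_m *\<^sub>v X g))))"
    using tr[OF sand_carrier(1)[OF Qc]] sandwich_vec[OF Qc Xc] by simp
  also have "\<dots> \<ge> 0" using qp Xc by (intro sum_nonneg) auto
  finally show "Re (mtrace (tensor_pow m n \<rho> * (Pi_m * Q * Pi_m))) \<ge> 0" .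
qed

lemma pure_tensor:
  assumes \<rho>: "\<rho> \<in> density_ops m" "rank_one m \<rho>"
  obtains \<psi> where "\<psi> \<in> carrier_vec m" "tensor_pow m n \<rho> = outer (tpv m n \<psi>) (tpv m n \<psi>)"
proof -
  obtain \<psi> where \<psi>: "\<psi> \<in> carrier_vec m" "\<rho> = Matrix.mat m m (\<lambda>(i,j). \<psi> $ i * cnj (\<psi> $ j))"
    using assms(2) unfolding rank_one_def by auto
  then have "\<rho> = outer \<psi> \<psi>" unfolding outer_def by auto
  then show ?thesis using that \<psi>(1) tensor_outer[OF \<psi>(1) m] by auto
qed

lemma pure_Pm_zero:
  assumes \<rho>: "\<rho> \<in> density_ops m" "rank_one m \<rho>" and Q: "Q \<in> carrier_mat NN NN"
  shows "mtrace (tensor_pow m n \<rho> * (Pi_m * Q * Pi_m)) = 0" and "mtrace (tensor_pow m n \<rho> * Pi_m) = 0"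
proof -
  obtain \<psi> where \<psi>: "\<psi> \<in> carrier_vec m" and T: "tensor_pow m n \<rho> = outer (tpv m n \<psi>) (tpv m n \<psi>)"
    using pure_tensor[OF \<rho>] by blast
  let ?t = "tpv m n \<psi>"
  have tc: "?t \<in> carrier_vec NN" by simp
  have z: "Pi_m *\<^sub>v ?t = 0\<^sub>v NN"
  proof -
    have "Pi_p *\<^sub>v ?t = ?t" by (rule proj_fix[OF Pi_p tpv_sym[OF m]])
    then show ?thesis using Pm_eq[OF tc] tc by auto
  qed
  have "mtrace (tensor_pow m n \<rho> * (Pi_m * Q * Pi_m)) = cinner ?t ((Pi_m * Q * Pi_m) *\<^sub>v ?t)"
    unfolding T by (rule mtrace_outer_left[of _ NN]) (use sand_carrier(1)[OF Q] in auto)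
  also have "\<dots> = cinner (Pi_m *\<^sub>v ?t) (Q *\<^sub>v (Pi_m *\<^sub>v ?t))" by (rule sandwich_vec[OF Q tc])
  also have "\<dots> = 0" unfolding z using tc by (simp add: cinner_def2[of _ NN])
  finally show "mtrace (tensor_pow m n \<rho> * (Pi_m * Q * Pi_m)) = 0" .
  have "mtrace (tensor_pow m n \<rho> * Pi_m) = cinner ?t (Pi_m *\<^sub>v ?t)"
    unfolding T by (rule mtrace_outer_left[of _ NN]) auto
  also have "\<dots> = 0" unfolding z using tc by (simp add: cinner_def2[of _ NN])
  finally show "mtrace (tensor_pow m n \<rho> * Pi_m) = 0" .
qed

end


definition zeta :: "nat \<Rightarrow> complex" where
  "zeta R = exp (2 * of_real pi * \<i> / of_nat R)"

lemma zeta_pow: "zeta R ^ k = exp (2 * of_real pi * \<i> * of_nat k / of_nat R)"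
  unfolding zeta_def exp_of_nat_mult[symmetric] by (simp add: field_simps)

lemma zeta_pow_1: "R \<ge> 1 \<Longrightarrow> zeta R ^ k = 1 \<longleftrightarrow> R dvd k"
  unfolding zeta_pow by (rule complex_root_unity_eq_1)

lemma zeta_norm: "cnj (zeta R ^ k) * zeta R ^ k = 1"
proof -
  have "cmod (zeta R ^ k) = 1" unfolding zeta_pow by (simp add: norm_exp_eq_Re)
  then have "complex_of_real ((cmod (zeta R ^ k))\<^sup>2) = 1" by simp
  then show ?thesis unfolding complex_norm_square by (simp add: mult.commute)
qed

lemma zeta_geom:
  assumes R: "R \<ge> 1"
  shows "(\<Sum>j<R. (zeta R ^ k) ^ j) = (if R dvd k then of_nat R else 0)"
proof (cases "R dvd k")
  case True
  then have "zeta R ^ k = 1" using zeta_pow_1[OF R] by simp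
  then show ?thesis using True by simp
next
  case False
  then have ne: "zeta R ^ k \<noteq> 1" using zeta_pow_1[OF R] by simp
  have "(zeta R ^ k) ^ R = (zeta R ^ R) ^ k" by (simp add: power_mult[symmetric] mult.commute)
  also have "zeta R ^ R = 1" using zeta_pow_1[OF R] by simp
  finally have "(zeta R ^ k) ^ R = 1" by simp
  then show ?thesis using ne False by (simp add: sum_gp_strict)
qed

lemma polarization:
  fixes p b c :: complex and n :: nat
  defines "R \<equiv> 2 * n + 1"
  shows "(\<Sum>j<R. (zeta R ^ j) ^ n * (p + zeta R ^ j * b + cnj (zeta R ^ j) * c) ^ n) = of_nat R * c ^ n"
proof -
  have R: "R \<ge> 1" unfolding R_def by simp
  define P where "P = [:c, p, b:] ^ n"
  have degP: "degree P \<le> 2 * n"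
  proof -
    have "degree P \<le> degree [:c, p, b:] * n" unfolding P_def by (rule degree_power_le)
    also have "degree [:c, p, b:] \<le> 2" by (simp add: degree_pCons_le)
    then have "degree [:c, p, b:] * n \<le> 2 * n" by simp
    finally show ?thesis .
  qed
  have pt: "(zeta R ^ j) ^ n * (p + zeta R ^ j * b + cnj (zeta R ^ j) * c) ^ n = poly P (zeta R ^ j)" for j
  proof -
    let ?z = "zeta R ^ j"
    have "?z ^ n * (p + ?z * b + cnj ?z * c) ^ n = (?z * (p + ?z * b + cnj ?z * c)) ^ n"
      by (simp add: power_mult_distrib)
    also have "?z * (p + ?z * b + cnj ?z * c) = c + ?z * (p + ?z * b)"
      using zeta_norm[of R j] by (simp add: algebra_simps)
    finally show ?thesis unfolding P_def by (simp add: algebra_simps)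
  qed
  have "(\<Sum>j<R. poly P (zeta R ^ j)) = (\<Sum>j<R. \<Sum>i\<le>degree P. coeff P i * (zeta R ^ i) ^ j)"
    by (simp add: poly_altdef power_mult[symmetric] mult.commute)
  also have "\<dots> = (\<Sum>i\<le>degree P. coeff P i * (\<Sum>j<R. (zeta R ^ i) ^ j))"
    by (subst sum.swap) (simp add: sum_distrib_left)
  also have "\<dots> = (\<Sum>i\<le>degree P. if i = 0 then coeff P 0 * of_nat R else 0)"
  proof (intro sum.cong refl)
    fix i assume i: "i \<in> {..degree P}"
    have "R dvd i \<longleftrightarrow> i = 0"
    proof
      assume "R dvd i"
      moreover have "i < R" using i degP unfolding R_def by simp
      ultimately show "i = 0" by (metis dvd_imp_le not_less neq0_conv)
    qed simp
    then show "coeff P i * (\<Sum>j<R. (zeta R ^ i) ^ j) = (if i = 0 then coeff P 0 * of_nat R else 0)"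
      using zeta_geom[OF R, of i] by auto
  qed
  also have "\<dots> = coeff P 0 * of_nat R" by simp
  also have "coeff P 0 = c ^ n" unfolding P_def poly_0_coeff_0[symmetric] by simp
  finally show ?thesis using pt by (simp add: mult.commute)
qed

lemma dvd_shift:
  fixes x y R :: nat
  assumes "x < R" "y < R"
  shows "R dvd (R - x + y) \<longleftrightarrow> x = y"
proof (cases "x \<le> y")
  case True
  then have e: "R - x + y = R + (y - x)" using assms by simp
  have "R dvd (R + (y - x)) \<longleftrightarrow> R dvd (y - x)" by (simp add: dvd_add_right_iff)
  also have "\<dots> \<longleftrightarrow> y - x = 0"
  proof
    assume "R dvd (y - x)"
    moreover have "y - x < R" using assms by simp
    ultimately show "y - x = 0" by (metis dvd_imp_le not_less neq0_conv)
  qed simp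
  finally show ?thesis using e True by auto
next
  case False
  then have t: "0 < R - x + y" "R - x + y < R" using assms by auto
  then have "\<not> R dvd (R - x + y)" by (metis dvd_imp_le not_less)
  then show ?thesis using False by auto
qed

definition ee :: "nat \<Rightarrow> nat \<Rightarrow> nat \<Rightarrow> nat" where
  "ee m n I = (\<Sum>k<n. (n + 1) ^ digit m k I)"

definition cnt :: "nat \<Rightarrow> nat \<Rightarrow> nat \<Rightarrow> nat \<Rightarrow> nat" where
  "cnt m n a I = card {k. k < n \<and> digit m k I = a}"

lemma sum_regroup:
  fixes f :: "nat \<Rightarrow> 'a::comm_semiring_1" and g :: "nat \<Rightarrow> nat" and n m :: nat
  assumes "\<And>k. k < n \<Longrightarrow> g k < m"
  shows "(\<Sum>k<n. f (g k)) = (\<Sum>a<m. of_nat (card {k. k < n \<and> g k = a}) * f a)"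
proof -
  have "(\<Sum>k<n. f (g k)) = (\<Sum>k<n. \<Sum>a<m. if g k = a then f a else 0)"
    using assms by (intro sum.cong refl) (simp add: sum.delta)
  also have "\<dots> = (\<Sum>a<m. \<Sum>k<n. if g k = a then f a else 0)" by (rule sum.swap)
  also have "\<dots> = (\<Sum>a<m. of_nat (card {k. k < n \<and> g k = a}) * f a)"
  proof (intro sum.cong refl)
    fix a
    have "(\<Sum>k<n. if g k = a then f a else 0) = (\<Sum>k\<in>{..<n} \<inter> {k. g k = a}. f a) + (\<Sum>k\<in>{..<n} \<inter> - {k. g k = a}. 0)"
      by (rule sum.If_cases) simp
    then have "(\<Sum>k<n. if g k = a then f a else 0) = of_nat (card ({..<n} \<inter> {k. g k = a})) * f a"
      by simp
    also have "{..<n} \<inter> {k. g k = a} = {k. k < n \<and> g k = a}" by auto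
    finally show "(\<Sum>k<n. if g k = a then f a else 0) = of_nat (card {k. k < n \<and> g k = a}) * f a"
      by simp
  qed
  finally show ?thesis .
qed

lemma ee_regroup: "m \<ge> 1 \<Longrightarrow> ee m n I = (\<Sum>a<m. cnt m n a I * (n + 1) ^ a)"
  unfolding ee_def cnt_def using sum_regroup[of n "\<lambda>k. digit m k I" m "\<lambda>a. (n + 1) ^ a"] digit_lt
  by simp

lemma cnt_le: "cnt m n a I \<le> n"
proof -
  have "cnt m n a I \<le> card {..<n}" unfolding cnt_def by (intro card_mono) auto
  then show ?thesis by simp
qed

lemma digit_ee: "m \<ge> 1 \<Longrightarrow> a < m \<Longrightarrow> digit (n + 1) a (ee m n I) = cnt m n a I"
  unfolding ee_regroup using cnt_le by (intro digit_sum) (auto simp: le_imp_less_Suc)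

lemma ee_lt: "m \<ge> 1 \<Longrightarrow> ee m n I < (n + 1) ^ m"
  unfolding ee_regroup using cnt_le by (intro digit_sum_lt) (auto simp: le_imp_less_Suc)

lemma count_list_filter: "count_list xs x = length (filter (\<lambda>y. y = x) xs)"
  by (induct xs) auto

lemma ee_perm:
  assumes m: "m \<ge> 1" and I: "I < m ^ n" and K: "K < m ^ n" and e: "ee m n I = ee m n K"
  obtains p where "p permutes {..<n}" "perm_idx m n p I = K"
proof -
  define xs where "xs = map (\<lambda>k. digit m k K) [0..<n]"
  define ys where "ys = map (\<lambda>k. digit m k I) [0..<n]"
  have cntI: "count (mset ys) a = cnt m n a I" for a
    unfolding ys_def cnt_def count_mset count_list_filter length_filter_conv_card by (auto intro!: arg_cong[where f=card])
  have cntK: "count (mset xs) a = cnt m n a K" for a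
    unfolding xs_def cnt_def count_mset count_list_filter length_filter_conv_card by (auto intro!: arg_cong[where f=card])
  have "cnt m n a I = cnt m n a K" for a
  proof (cases "a < m")
    case True
    then show ?thesis using digit_ee[OF m True, of n I] digit_ee[OF m True, of n K] e by simp
  next
    case False
    then have "cnt m n a I = 0" "cnt m n a K = 0" unfolding cnt_def using digit_lt[OF m] by (auto intro: leD)
    then show ?thesis by simp
  qed
  then have "mset xs = mset ys" using cntI cntK by (simp add: multiset_eq_iff)
  then obtain p where p: "p permutes {..<length ys}" "permute_list p ys = xs" by (rule mset_eq_permutation)
  have pn: "p permutes {..<n}" using p(1) unfolding ys_def by simp
  have "digit m k (perm_idx m n p I) = digit m k K" if k: "k < n" for k
  proof -
    have "xs ! k = ys ! (p k)" using p permute_list_nth[of p ys k] k unfolding ys_def by auto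
    moreover have "p k < n" using permutes_in_image[OF pn, of k] k by simp
    ultimately have "digit m k K = digit m (p k) I" using k unfolding xs_def ys_def by simp
    then show ?thesis using digit_perm_idx[OF m pn k] by simp
  qed
  then have "perm_idx m n p I = K" using digit_inj[OF perm_idx_lt[OF m] K] by blast
  then show ?thesis using that pn by blast
qed

lemma sym_ee:
  assumes m: "m \<ge> 1" and v: "v \<in> sym_subspace m n" and I: "I < m ^ n" and K: "K < m ^ n"
    and e: "ee m n I = ee m n K"
  shows "v $ I = v $ K"
proof -
  obtain p where p: "p permutes {..<n}" "perm_idx m n p I = K" using ee_perm[OF m I K e] by blast
  then show ?thesis using v I unfolding sym_subspace_def by auto
qed

definition phi :: "nat \<Rightarrow> nat \<Rightarrow> nat \<Rightarrow> complex vec" where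
  "phi m n j = vec m (\<lambda>x. (zeta ((n + 1) ^ m) ^ j) ^ ((n + 1) ^ x))"

lemma phi_carrier[simp]: "phi m n j \<in> carrier_vec m" unfolding phi_def by simp

lemma tpv_phi: "m \<ge> 1 \<Longrightarrow> I < m ^ n \<Longrightarrow> tpv m n (phi m n j) $ I = (zeta ((n + 1) ^ m) ^ j) ^ ee m n I"
  unfolding ee_def using digit_lt by (simp add: tpv_index phi_def power_sum)

lemma sym_span:
  assumes m: "m \<ge> 1" and v: "v \<in> sym_subspace m n"
  shows "\<exists>a. \<forall>K < m ^ n. v $ K = (\<Sum>j<(n + 1) ^ m. a j * tpv m n (phi m n j) $ K)"
proof -
  define R where "R = (n + 1) ^ m"
  have R: "R \<ge> 1" unfolding R_def by simp
  define z where "z = zeta R"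
  define c where "c I = card {J. J < m ^ n \<and> ee m n J = ee m n I}" for I
  define a where "a j = (\<Sum>I<m ^ n. v $ I / of_nat (c I) * (z ^ j) ^ (R - ee m n I)) / of_nat R" for j
  have eR: "ee m n I < R" for I unfolding R_def by (rule ee_lt[OF m])
  show ?thesis
  proof (intro exI allI impI)
    fix K assume K: "K < m ^ n"
    have "(\<Sum>j<R. a j * tpv m n (phi m n j) $ K) = (\<Sum>j<R. a j * (z ^ j) ^ ee m n K)"
      using tpv_phi[OF m K] unfolding z_def R_def by simp
    also have "\<dots> = (\<Sum>j<R. \<Sum>I<m ^ n. v $ I / of_nat (c I) * (z ^ (R - ee m n I + ee m n K)) ^ j / of_nat R)"
    proof (intro sum.cong refl)
      fix j
      have pw: "(z ^ j) ^ x * (z ^ j) ^ y = (z ^ (x + y)) ^ j" for x y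
        by (simp only: power_mult[symmetric] power_add[symmetric]) (simp add: algebra_simps)
      have "a j * (z ^ j) ^ ee m n K = (\<Sum>I<m ^ n. v $ I / of_nat (c I) * ((z ^ j) ^ (R - ee m n I) * (z ^ j) ^ ee m n K) / of_nat R)"
        unfolding a_def by (simp add: sum_distrib_right sum_divide_distrib mult.assoc)
      then show "a j * (z ^ j) ^ ee m n K = (\<Sum>I<m ^ n. v $ I / of_nat (c I) * (z ^ (R - ee m n I + ee m n K)) ^ j / of_nat R)"
        by (simp only: pw)
    qed
    also have "\<dots> = (\<Sum>I<m ^ n. v $ I / of_nat (c I) * (\<Sum>j<R. (z ^ (R - ee m n I + ee m n K)) ^ j) / of_nat R)"
      by (subst sum.swap) (simp add: sum_distrib_left sum_divide_distrib)
    also have "\<dots> = (\<Sum>I<m ^ n. if ee m n I = ee m n K then v $ I / of_nat (c I) else 0)"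
      unfolding z_def using zeta_geom[OF R] dvd_shift[OF eR eR] R by (intro sum.cong refl) auto
    also have "\<dots> = (\<Sum>I\<in>{J. J < m ^ n \<and> ee m n J = ee m n K}. v $ I / of_nat (c I))"
      by (subst sum.inter_filter[symmetric]) (auto intro!: sum.cong)
    also have "\<dots> = (\<Sum>I\<in>{J. J < m ^ n \<and> ee m n J = ee m n K}. v $ K / of_nat (c K))"
      using sym_ee[OF m v _ K] unfolding c_def by (intro sum.cong refl) auto
    also have "\<dots> = of_nat (c K) * (v $ K / of_nat (c K))" unfolding c_def by simp
    also have "\<dots> = v $ K"
    proof -
      have "K \<in> {J. J < m ^ n \<and> ee m n J = ee m n K}" using K by simp
      then have "c K \<noteq> 0" unfolding c_def by (metis card_0_eq empty_iff finite_Collect_conjI finite_Collect_less_nat)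
      then show ?thesis by simp
    qed
    finally show "v $ K = (\<Sum>j<(n + 1) ^ m. a j * tpv m n (phi m n j) $ K)" unfolding R_def by simp
  qed
qed


definition lin_form :: "nat \<Rightarrow> nat \<Rightarrow> (complex mat \<Rightarrow> complex) \<Rightarrow> bool" where
  "lin_form m n F \<longleftrightarrow> (\<exists>xs. (\<forall>p\<in>set xs. snd p \<in> carrier_vec m) \<and>
     (\<forall>A\<in>carrier_mat m m. F A = sum_list (map (\<lambda>p. fst p * (cinner (snd p) (A *\<^sub>v snd p)) ^ n) xs)))"

lemma lf_zero: "lin_form m n (\<lambda>A. 0)"
  unfolding lin_form_def by (rule exI[of _ "[]"]) simp

lemma lf_add: "lin_form m n F \<Longrightarrow> lin_form m n G \<Longrightarrow> lin_form m n (\<lambda>A. F A + G A)"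
  unfolding lin_form_def
proof (elim exE conjE)
  fix xs ys assume "\<forall>p\<in>set xs. snd p \<in> carrier_vec m" "\<forall>p\<in>set ys. snd p \<in> carrier_vec m"
    "\<forall>A\<in>carrier_mat m m. F A = sum_list (map (\<lambda>p. fst p * (cinner (snd p) (A *\<^sub>v snd p)) ^ n) xs)"
    "\<forall>A\<in>carrier_mat m m. G A = sum_list (map (\<lambda>p. fst p * (cinner (snd p) (A *\<^sub>v snd p)) ^ n) ys)"
  then show "\<exists>zs. (\<forall>p\<in>set zs. snd p \<in> carrier_vec m) \<and>
     (\<forall>A\<in>carrier_mat m m. F A + G A = sum_list (map (\<lambda>p. fst p * (cinner (snd p) (A *\<^sub>v snd p)) ^ n) zs))"
    by (intro exI[of _ "xs @ ys"]) auto
qed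

lemma lf_scale: "lin_form m n F \<Longrightarrow> lin_form m n (\<lambda>A. k * F A)"
  unfolding lin_form_def
proof (elim exE conjE)
  fix xs assume a: "\<forall>p\<in>set xs. snd p \<in> carrier_vec m"
    "\<forall>A\<in>carrier_mat m m. F A = sum_list (map (\<lambda>p. fst p * (cinner (snd p) (A *\<^sub>v snd p)) ^ n) xs)"
  have "sum_list (map (\<lambda>p. fst p * (cinner (snd p) (A *\<^sub>v snd p)) ^ n) (map (\<lambda>p. (k * fst p, snd p)) xs))
     = k * sum_list (map (\<lambda>p. fst p * (cinner (snd p) (A *\<^sub>v snd p)) ^ n) xs)" for A
    by (induct xs) (auto simp: algebra_simps)
  then show "\<exists>zs. (\<forall>p\<in>set zs. snd p \<in> carrier_vec m) \<and>
     (\<forall>A\<in>carrier_mat m m. k * F A = sum_list (map (\<lambda>p. fst p * (cinner (snd p) (A *\<^sub>v snd p)) ^ n) zs))"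
    using a by (intro exI[of _ "map (\<lambda>p. (k * fst p, snd p)) xs"]) auto
qed

lemma lf_cong: "lin_form m n F \<Longrightarrow> (\<And>A. A \<in> carrier_mat m m \<Longrightarrow> F A = G A) \<Longrightarrow> lin_form m n G"
  unfolding lin_form_def by metis

lemma lf_sum: "finite S \<Longrightarrow> (\<And>i. i \<in> S \<Longrightarrow> lin_form m n (F i)) \<Longrightarrow> lin_form m n (\<lambda>A. \<Sum>i\<in>S. F i A)"
proof (induction S rule: finite_induct)
  case empty then show ?case using lf_zero by simp
next
  case (insert x S)
  then have "lin_form m n (\<lambda>A. F x A + (\<Sum>i\<in>S. F i A))" by (intro lf_add) auto
  then show ?case using insert by simp
qed

lemma cinner_smult_left: "x \<in> carrier_vec N \<Longrightarrow> cinner (z \<cdot>\<^sub>v x) y = cnj z * cinner x y"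
  by (simp add: cinner_def2[of _ N] sum_distrib_left mult.assoc)

lemma cinner_smult_right: "x \<in> carrier_vec N \<Longrightarrow> y \<in> carrier_vec N \<Longrightarrow> cinner x (z \<cdot>\<^sub>v y) = z * cinner x y"
  by (simp add: cinner_def2[of _ N] sum_distrib_left algebra_simps)

lemma cinner_quad_expand:
  assumes A: "A \<in> carrier_mat m m" and \<phi>: "\<phi> \<in> carrier_vec m" and \<chi>: "\<chi> \<in> carrier_vec m"
  shows "cinner (\<phi> + z \<cdot>\<^sub>v \<chi>) (A *\<^sub>v (\<phi> + z \<cdot>\<^sub>v \<chi>)) =
    cinner \<phi> (A *\<^sub>v \<phi>) + z * cinner \<phi> (A *\<^sub>v \<chi>) + cnj z * cinner \<chi> (A *\<^sub>v \<phi>) + cnj z * z * cinner \<chi> (A *\<^sub>v \<chi>)"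
proof -
  have zc: "z \<cdot>\<^sub>v \<chi> \<in> carrier_vec m" using \<chi> by simp
  have Av: "A *\<^sub>v (\<phi> + z \<cdot>\<^sub>v \<chi>) = A *\<^sub>v \<phi> + z \<cdot>\<^sub>v (A *\<^sub>v \<chi>)"
    using A \<phi> \<chi> by (simp add: mult_add_distrib_mat_vec[OF A \<phi> zc] mult_mat_vec[OF A \<chi>])
  have c1: "A *\<^sub>v \<phi> \<in> carrier_vec m" "z \<cdot>\<^sub>v (A *\<^sub>v \<chi>) \<in> carrier_vec m" "A *\<^sub>v \<chi> \<in> carrier_vec m"
    using A \<phi> \<chi> by auto
  show ?thesis unfolding Av
    using \<phi> \<chi> zc c1
    by (simp add: cinner_add_left[of _ m] cinner_add_right[of _ m] cinner_smult_left[of _ m] cinner_smult_right[of _ m] algebra_simps)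
qed

lemma lf_basic:
  assumes \<phi>: "\<phi> \<in> carrier_vec m" and \<chi>: "\<chi> \<in> carrier_vec m"
  shows "lin_form m n (\<lambda>A. (cinner \<chi> (A *\<^sub>v \<phi>)) ^ n)"
proof -
  define R where "R = 2 * n + 1"
  define z where "z j = zeta R ^ j" for j
  define xs where "xs = map (\<lambda>j. (z j ^ n / of_nat R, \<phi> + z j \<cdot>\<^sub>v \<chi>)) [0..<R]"
  have xsc: "\<forall>p\<in>set xs. snd p \<in> carrier_vec m" unfolding xs_def using \<phi> \<chi> by auto
  have "(cinner \<chi> (A *\<^sub>v \<phi>)) ^ n = sum_list (map (\<lambda>p. fst p * (cinner (snd p) (A *\<^sub>v snd p)) ^ n) xs)"
    if A: "A \<in> carrier_mat m m" for A
  proof -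
    let ?p = "cinner \<phi> (A *\<^sub>v \<phi>) + cinner \<chi> (A *\<^sub>v \<chi>)"
    let ?b = "cinner \<phi> (A *\<^sub>v \<chi>)" and ?c = "cinner \<chi> (A *\<^sub>v \<phi>)"
    have q: "cinner (\<phi> + z j \<cdot>\<^sub>v \<chi>) (A *\<^sub>v (\<phi> + z j \<cdot>\<^sub>v \<chi>)) = ?p + z j * ?b + cnj (z j) * ?c" for j
      using cinner_quad_expand[OF A \<phi> \<chi>, of "z j"] zeta_norm[of R j] unfolding z_def by simp
    have "sum_list (map (\<lambda>p. fst p * (cinner (snd p) (A *\<^sub>v snd p)) ^ n) xs) =
        (\<Sum>j<R. z j ^ n / of_nat R * (cinner (\<phi> + z j \<cdot>\<^sub>v \<chi>) (A *\<^sub>v (\<phi> + z j \<cdot>\<^sub>v \<chi>))) ^ n)"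
      unfolding xs_def by (simp add: sum_set_upt_conv_sum_list_nat[symmetric] atLeast0LessThan comp_def)
    also have "\<dots> = (\<Sum>j<R. z j ^ n * (?p + z j * ?b + cnj (z j) * ?c) ^ n) / of_nat R"
      unfolding q by (simp add: sum_divide_distrib)
    also have "(\<Sum>j<R. z j ^ n * (?p + z j * ?b + cnj (z j) * ?c) ^ n) = of_nat R * ?c ^ n"
      unfolding z_def R_def by (rule polarization)
    also have "of_nat R * ?c ^ n / of_nat R = ?c ^ n"
    proof -
      have Rnz: "(of_nat R :: complex) \<noteq> 0" unfolding R_def by (simp only: of_nat_eq_0_iff)
      show ?thesis by (rule nonzero_mult_div_cancel_left[OF Rnz])
    qed
    finally show ?thesis by simp
  qed
  then show ?thesis unfolding lin_form_def using xsc by blast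
qed

lemma expand_cinner_left:
  assumes w: "w \<in> carrier_vec N" and x: "\<And>l. x l \<in> carrier_vec N"
    and e: "\<And>I. I < N \<Longrightarrow> w $ I = (\<Sum>l\<in>L. b l * x l $ I)"
  shows "cinner w y = (\<Sum>l\<in>L. cnj (b l) * cinner (x l) y)"
proof -
  have "cinner w y = (\<Sum>I<N. cnj (\<Sum>l\<in>L. b l * x l $ I) * y $ I)"
    using w e by (simp add: cinner_def2[of _ N])
  also have "\<dots> = (\<Sum>l\<in>L. cnj (b l) * (\<Sum>I<N. cnj (x l $ I) * y $ I))"
    by (simp add: sum_distrib_right sum_distrib_left sum.swap[of _ L] mult.assoc)
  also have "\<dots> = (\<Sum>l\<in>L. cnj (b l) * cinner (x l) y)"
    using x by (simp add: cinner_def2[of _ N])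
  finally show ?thesis .
qed

lemma expand_cinner_right:
  assumes w: "w \<in> carrier_vec N" and e: "\<And>I. I < N \<Longrightarrow> y $ I = (\<Sum>l\<in>L. a l * yy l $ I)"
  shows "cinner w y = (\<Sum>l\<in>L. a l * cinner w (yy l))"
proof -
  have "cinner w y = (\<Sum>I<N. cnj (w $ I) * (\<Sum>l\<in>L. a l * yy l $ I))"
    using w e by (simp add: cinner_def2[of _ N])
  also have "\<dots> = (\<Sum>l\<in>L. a l * (\<Sum>I<N. cnj (w $ I) * yy l $ I))"
    by (simp add: sum_distrib_right sum_distrib_left sum.swap[of _ "{..<N}"] algebra_simps)
  also have "\<dots> = (\<Sum>l\<in>L. a l * cinner w (yy l))"
    using w by (simp add: cinner_def2[of _ N])
  finally show ?thesis .
qed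

lemma expand_mult:
  fixes T :: "complex mat"
  assumes T: "T \<in> carrier_mat N N" and x: "\<And>l. x l \<in> carrier_vec N" and v: "v \<in> carrier_vec N"
    and e: "\<And>J. J < N \<Longrightarrow> v $ J = (\<Sum>l\<in>L. a l * x l $ J)" and I: "I < N"
  shows "(T *\<^sub>v v) $ I = (\<Sum>l\<in>L. a l * (T *\<^sub>v x l) $ I)"
proof -
  have "(T *\<^sub>v v) $ I = (\<Sum>J<N. T $$ (I,J) * (\<Sum>l\<in>L. a l * x l $ J))"
    using mult_vec_index[OF T v I] e by simp
  also have "\<dots> = (\<Sum>J<N. \<Sum>l\<in>L. T $$ (I,J) * (a l * x l $ J))"
    by (simp add: sum_distrib_left)
  also have "\<dots> = (\<Sum>J<N. \<Sum>l\<in>L. a l * (T $$ (I,J) * x l $ J))"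
    by (intro sum.cong refl) (rule mult.left_commute)
  also have "\<dots> = (\<Sum>l\<in>L. \<Sum>J<N. a l * (T $$ (I,J) * x l $ J))"
    by (rule sum.swap)
  also have "\<dots> = (\<Sum>l\<in>L. a l * (\<Sum>J<N. T $$ (I,J) * x l $ J))"
    by (simp add: sum_distrib_left)
  also have "\<dots> = (\<Sum>l\<in>L. a l * (T *\<^sub>v x l) $ I)"
    using mult_vec_index[OF T x I] by simp
  finally show ?thesis .
qed

lemma lf_sym_pair:
  assumes m: "m \<ge> 1" and v: "v \<in> sym_subspace m n" and w: "w \<in> sym_subspace m n"
  shows "lin_form m n (\<lambda>A. cinner w (tensor_pow m n A *\<^sub>v v))"
proof -
  let ?L = "{..<(n + 1) ^ m}"
  let ?t = "\<lambda>j. tpv m n (phi m n j)"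
  obtain a where a: "\<forall>K < m ^ n. v $ K = (\<Sum>j\<in>?L. a j * ?t j $ K)" using sym_span[OF m v] by blast
  obtain b where b: "\<forall>K < m ^ n. w $ K = (\<Sum>j\<in>?L. b j * ?t j $ K)" using sym_span[OF m w] by blast
  have vc: "v \<in> carrier_vec (m ^ n)" and wc: "w \<in> carrier_vec (m ^ n)"
    using v w unfolding sym_subspace_def by auto
  have eq: "cinner w (tensor_pow m n A *\<^sub>v v) =
     (\<Sum>j\<in>?L. a j * (\<Sum>l\<in>?L. cnj (b l) * (cinner (phi m n l) (A *\<^sub>v phi m n j)) ^ n))"
    if A: "A \<in> carrier_mat m m" for A
  proof -
    let ?T = "tensor_pow m n A"
    have "cinner w (?T *\<^sub>v v) = (\<Sum>j\<in>?L. a j * cinner w (?T *\<^sub>v ?t j))"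
      by (rule expand_cinner_right[OF wc]) (rule expand_mult[OF tensor_pow_carrier _ vc], use a in auto)
    also have "\<dots> = (\<Sum>j\<in>?L. a j * (\<Sum>l\<in>?L. cnj (b l) * cinner (?t l) (?T *\<^sub>v ?t j)))"
      by (intro sum.cong refl arg_cong2[where f="(*)"] expand_cinner_left[OF wc]) (use b in auto)
    also have "\<dots> = (\<Sum>j\<in>?L. a j * (\<Sum>l\<in>?L. cnj (b l) * (cinner (phi m n l) (A *\<^sub>v phi m n j)) ^ n))"
      using tpv_cinner[OF m A] by simp
    finally show ?thesis .
  qed
  have "lin_form m n (\<lambda>A. \<Sum>j\<in>?L. a j * (\<Sum>l\<in>?L. cnj (b l) * (cinner (phi m n l) (A *\<^sub>v phi m n j)) ^ n))"
    by (intro lf_sum lf_scale lf_basic phi_carrier) auto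
  then show ?thesis by (rule lf_cong) (simp add: eq)
qed

context qsetup
begin

lemma lf_trace: "Q \<in> carrier_mat NN NN \<Longrightarrow> lin_form m n (\<lambda>A. mtrace (tensor_pow m n A * (Pi_p * Q * Pi_p)))"
proof -
  assume Q: "Q \<in> carrier_mat NN NN"
  have "lin_form m n (\<lambda>A. \<Sum>c<NN. \<Sum>d<NN. Q $$ (c,d) *
      cinner (Pi_p *\<^sub>v unit_vec NN d) (tensor_pow m n A *\<^sub>v (Pi_p *\<^sub>v unit_vec NN c)))"
    by (intro lf_sum lf_scale lf_sym_pair[OF m] Ppe_sym) auto
  then show ?thesis
    by (rule lf_cong) (simp add: trace_sym_expand[OF _ Q])
qed

end


lemma sum_delta0_expand:
  fixes a b :: "nat \<Rightarrow> complex"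
  assumes m: "m \<ge> 1"
  shows "(\<Sum>i<m. cnj (a i - (if i = 0 then x else 0)) * (b i - (if i = 0 then y else 0))) =
    (\<Sum>i<m. cnj (a i) * b i) - cnj x * b 0 - cnj (a 0) * y + cnj x * y"
proof -
  have "(\<Sum>i<m. cnj (a i - (if i = 0 then x else 0)) * (b i - (if i = 0 then y else 0))) =
     (\<Sum>i<m. cnj (a i) * b i - (if i = 0 then cnj x * b 0 + cnj (a 0) * y - cnj x * y else 0))"
    by (intro sum.cong refl) (auto simp: algebra_simps)
  also have "\<dots> = (\<Sum>i<m. cnj (a i) * b i) - (cnj x * b 0 + cnj (a 0) * y - cnj x * y)"
    using m by (simp add: sum_subtractf)
  finally show ?thesis by simp
qed

lemma adj_dims[simp]: "dim_row (adj A) = dim_col A" "dim_col (adj A) = dim_row A"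
  unfolding adj_def by auto

lemma adj_one: "adj (1\<^sub>m m) = (1\<^sub>m m :: complex mat)"
  by (rule eq_matI) (auto simp: adj_def)

lemma unitary_one: "unitary_mat m (1\<^sub>m m)"
proof -
  have "adj (1\<^sub>m m) = (1\<^sub>m m :: complex mat)" by (rule eq_matI) (auto simp: adj_def)
  then show ?thesis unfolding unitary_mat_def by simp
qed

lemma householder:
  assumes m: "m \<ge> 1" and u: "u \<in> carrier_vec m"
  shows "\<exists>U c. unitary_mat m U \<and> adj U *\<^sub>v u = c \<cdot>\<^sub>v unit_vec m 0 \<and> cnj c * c = cinner u u"
proof -
  define u0 where "u0 = u $ 0"
  define r where "r = cmod u0"
  define N2 where "N2 = (\<Sum>i<m. (cmod (u $ i))\<^sup>2)"
  define nu where "nu = sqrt N2"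
  define lam where "lam = (if u0 = 0 then 1 else u0 / complex_of_real r)"
  define c where "c = complex_of_real nu * lam"
  define e where "e = (unit_vec m 0 :: complex vec)"
  define w where "w = u - c \<cdot>\<^sub>v e"
  have uu: "cinner u u = complex_of_real N2" unfolding N2_def by (rule cinner_self_real[OF u])
  have N2: "N2 \<ge> 0" unfolding N2_def by (simp add: sum_nonneg)
  have nsq: "cnj u0 * u0 = complex_of_real (r * r)"
    using complex_norm_square[of u0] unfolding r_def by (simp add: power2_eq_square mult.commute)
  have lam1: "cnj lam * lam = 1"
  proof (cases "u0 = 0")
    case False
    then have rz: "r \<noteq> 0" unfolding r_def by simp
    have "cnj lam * lam = cnj u0 * u0 / (complex_of_real r * complex_of_real r)"
      using False unfolding lam_def by simp
    also have "\<dots> = 1" unfolding nsq using rz by simp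
    finally show ?thesis .
  qed (simp add: lam_def)
  have lamu: "cnj lam * u0 = complex_of_real r" "lam * cnj u0 = complex_of_real r"
  proof -
    show "cnj lam * u0 = complex_of_real r"
    proof (cases "u0 = 0")
      case False
      then have "r \<noteq> 0" unfolding r_def by simp
      have "cnj lam * u0 = cnj u0 * u0 / complex_of_real r" using False unfolding lam_def by simp
      also have "\<dots> = complex_of_real r" unfolding nsq using \<open>r \<noteq> 0\<close> by simp
      finally show ?thesis .
    qed (simp add: lam_def r_def)
    then show "lam * cnj u0 = complex_of_real r"
      by (metis complex_cnj_cnj complex_cnj_complex_of_real complex_cnj_mult)
  qed
  have cc: "cnj c * c = cinner u u"
  proof -
    have "cnj c * c = complex_of_real (nu * nu) * (cnj lam * lam)" unfolding c_def by (simp add: algebra_simps)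
    also have "\<dots> = complex_of_real N2" using lam1 N2 unfolding nu_def by simp
    finally show ?thesis using uu by simp
  qed
  have ec: "e \<in> carrier_vec m" unfolding e_def by simp
  have wc: "w \<in> carrier_vec m" unfolding w_def using u ec by simp
  have wi: "w $ i = u $ i - (if i = 0 then c else 0)" if "i < m" for i
    unfolding w_def e_def using that u by (auto simp: unit_vec_def)
  have wu: "cinner w u = cinner u u - cnj c * u0"
  proof -
    have "cinner w u = (\<Sum>i<m. cnj (u $ i - (if i = 0 then c else 0)) * (u $ i - (if i = 0 then 0 else 0)))"
      unfolding cinner_def2[OF wc] using wi by (intro sum.cong refl) auto
    also have "\<dots> = cinner u u - cnj c * u0"
      unfolding sum_delta0_expand[OF m] cinner_def2[OF u] u0_def by simp
    finally show ?thesis .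
  qed
  have ww: "cinner w w = cinner u u - cnj c * u0 - cnj u0 * c + cnj c * c"
  proof -
    have "cinner w w = (\<Sum>i<m. cnj (u $ i - (if i = 0 then c else 0)) * (u $ i - (if i = 0 then c else 0)))"
      unfolding cinner_def2[OF wc] using wi by (intro sum.cong refl) auto
    also have "\<dots> = cinner u u - cnj c * u0 - cnj u0 * c + cnj c * c"
      unfolding sum_delta0_expand[OF m] cinner_def2[OF u] u0_def by simp
    finally show ?thesis .
  qed
  have key: "2 * cinner w u = cinner w w"
  proof -
    have "cnj c * u0 = complex_of_real nu * complex_of_real r" unfolding c_def using lamu by (simp add: mult.assoc)
    moreover have "cnj u0 * c = complex_of_real nu * complex_of_real r" unfolding c_def using lamu by (simp add: ac_simps)
    ultimately show ?thesis unfolding wu ww cc by simp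
  qed
  show ?thesis
  proof (cases "w = 0\<^sub>v m")
    case True
    have "u = c \<cdot>\<^sub>v e"
    proof (rule eq_vecI)
      fix i assume i: "i < dim_vec (c \<cdot>\<^sub>v e)"
      then have "w $ i = 0" using True by (simp add: e_def)
      then show "u $ i = (c \<cdot>\<^sub>v e) $ i" using i u unfolding w_def e_def by simp
    qed (use u in \<open>simp add: e_def\<close>)
    moreover have "adj (1\<^sub>m m) *\<^sub>v u = u" unfolding adj_one using u by simp
    ultimately have "adj (1\<^sub>m m) *\<^sub>v u = c \<cdot>\<^sub>v unit_vec m 0" unfolding e_def by simp
    then show ?thesis using unitary_one[of m] cc by blast
  next
    case False
    define W where "W = cinner w w"
    have Wnz: "W \<noteq> 0" unfolding W_def using cinner_self_zero[OF wc] False by auto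
    have Wreal: "cnj W = W" unfolding W_def using cinner_self_real[OF wc] by simp
    define k where "k = 2 / W"
    have kreal: "cnj k = k" unfolding k_def using Wreal by simp
    have kW: "k * W = 2" unfolding k_def using Wnz by simp
    define H where "H = Matrix.mat m m (\<lambda>(i,j). (if i = j then 1 else 0) - k * w $ i * cnj (w $ j))"
    have Hc: "H \<in> carrier_mat m m" unfolding H_def by simp
    have Hi: "H $$ (i,j) = (if i = j then 1 else 0) - k * w $ i * cnj (w $ j)" if "i < m" "j < m" for i j
      unfolding H_def using that by simp
    have adjH: "adj H = H"
      by (rule eq_matI) (use Hc kreal in \<open>auto simp: adj_index Hi mult.commute\<close>)
    have HH: "H * H = 1\<^sub>m m"
    proof (rule eq_matI)
      fix i j assume ij: "i < dim_row (1\<^sub>m m :: complex mat)" "j < dim_col (1\<^sub>m m :: complex mat)"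
      then have i: "i < m" and j: "j < m" by auto
      have "(H * H) $$ (i,j) = (\<Sum>l<m. H $$ (i,l) * H $$ (l,j))" by (rule mult_index[OF Hc Hc i j])
      also have "\<dots> = (\<Sum>l<m. (if i = l then (if l = j then 1 else 0) else 0)
          - (if i = l then k * w $ l * cnj (w $ j) else 0)
          - (if l = j then k * w $ i * cnj (w $ l) else 0)
          + k * k * w $ i * cnj (w $ j) * (cnj (w $ l) * w $ l))"
      proof (intro sum.cong refl)
        fix l assume l: "l \<in> {..<m}"
        show "H $$ (i,l) * H $$ (l,j) = (if i = l then (if l = j then 1 else 0) else 0)
          - (if i = l then k * w $ l * cnj (w $ j) else 0)
          - (if l = j then k * w $ i * cnj (w $ l) else 0)
          + k * k * w $ i * cnj (w $ j) * (cnj (w $ l) * w $ l)"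
          using i j l by (cases "i = l"; cases "l = j") (simp_all add: Hi algebra_simps)
      qed
      also have "\<dots> = (\<Sum>l<m. (if i = l then (if l = j then 1 else 0) else 0))
          - (\<Sum>l<m. (if i = l then k * w $ l * cnj (w $ j) else 0))
          - (\<Sum>l<m. (if l = j then k * w $ i * cnj (w $ l) else 0))
          + (\<Sum>l<m. k * k * w $ i * cnj (w $ j) * (cnj (w $ l) * w $ l))"
        by (simp only: sum.distrib sum_subtractf)
      also have "\<dots> = (if i = j then 1 else 0) - k * w $ i * cnj (w $ j) - k * w $ i * cnj (w $ j)
          + k * k * w $ i * cnj (w $ j) * W"
      proof -
        have 1: "(\<Sum>l<m. (if i = l then (if l = j then 1 else 0) else 0)) = (if i = j then 1 else (0::complex))"
          using i by simp
        have 2: "(\<Sum>l<m. (if i = l then k * w $ l * cnj (w $ j) else 0)) = k * w $ i * cnj (w $ j)"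
          using i by simp
        have 3: "(\<Sum>l<m. (if l = j then k * w $ i * cnj (w $ l) else 0)) = k * w $ i * cnj (w $ j)"
          using j by simp
        have 4: "(\<Sum>l<m. k * k * w $ i * cnj (w $ j) * (cnj (w $ l) * w $ l)) = k * k * w $ i * cnj (w $ j) * W"
          unfolding W_def cinner_def2[OF wc] by (simp add: sum_distrib_left)
        show ?thesis unfolding 1 2 3 4 ..
      qed
      also have "\<dots> = (if i = j then 1 else 0)"
      proof -
        have "k * k * w $ i * cnj (w $ j) * W = 2 * (k * w $ i * cnj (w $ j))"
          using kW by (simp add: algebra_simps)
        then show ?thesis by simp
      qed
      finally show "(H * H) $$ (i,j) = 1\<^sub>m m $$ (i,j)" using i j by simp
    qed (auto simp: H_def)
    have unit: "unitary_mat m H" unfolding unitary_mat_def using Hc adjH HH by simp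
    have "H *\<^sub>v u = c \<cdot>\<^sub>v e"
    proof (rule eq_vecI)
      fix i assume "i < dim_vec (c \<cdot>\<^sub>v e)"
      then have i: "i < m" by (simp add: e_def)
      have "(H *\<^sub>v u) $ i = (\<Sum>j<m. H $$ (i,j) * u $ j)" by (rule mult_vec_index[OF Hc u i])
      also have "\<dots> = (\<Sum>j<m. (if i = j then u $ j else 0) - k * w $ i * (cnj (w $ j) * u $ j))"
        using i by (intro sum.cong refl) (auto simp: Hi algebra_simps)
      also have "\<dots> = u $ i - k * w $ i * cinner w u"
        using i by (simp add: sum_subtractf cinner_def2[OF wc] sum_distrib_left)
      also have "k * cinner w u = 1" unfolding k_def using key Wnz unfolding W_def by (simp add: field_simps)
      then have "u $ i - k * w $ i * cinner w u = u $ i - w $ i" by (simp add: mult.commute mult.left_commute)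
      also have "\<dots> = (c \<cdot>\<^sub>v e) $ i" using i wi[OF i] by (simp add: e_def)
      finally show "(H *\<^sub>v u) $ i = (c \<cdot>\<^sub>v e) $ i" .
    qed (use Hc in \<open>simp add: e_def\<close>)
    then have "adj H *\<^sub>v u = c \<cdot>\<^sub>v unit_vec m 0" unfolding adjH e_def .
    then show ?thesis using unit cc by blast
  qed
qed


definition Gf :: "complex mat measure \<Rightarrow> (complex mat \<Rightarrow> real) \<Rightarrow> nat \<Rightarrow> complex mat set \<Rightarrow> complex vec \<Rightarrow> real" where
  "Gf M \<eta> n S u = (\<integral>\<rho>. indicator S \<rho> * (\<eta> \<rho> * Re ((cinner u (\<rho> *\<^sub>v u)) ^ n)) \<partial>M)"

locale qfull = qsetup m n Pi_p Pi_m for m n Pi_p Pi_m +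
  fixes M :: "complex mat measure" and \<eta> \<mu> :: "complex mat \<Rightarrow> real"
  assumes space: "space M = density_ops m"
    and M_inv: "\<And>U. unitary_mat m U \<Longrightarrow>
                  (\<lambda>\<rho>. U * \<rho> * adj U) \<in> M \<rightarrow>\<^sub>M M \<and> distr M M (\<lambda>\<rho>. U * \<rho> * adj U) = M"
    and mu_inv: "\<And>U \<rho>. unitary_mat m U \<Longrightarrow> \<rho> \<in> density_ops m \<Longrightarrow> \<mu> (U * \<rho> * adj U) = \<mu> \<rho>"
    and mu_pure: "\<And>\<rho>. \<rho> \<in> density_ops m \<Longrightarrow> \<mu> \<rho> = 1 \<longleftrightarrow> rank_one m \<rho>"
    and mu_range: "\<And>\<rho>. \<rho> \<in> density_ops m \<Longrightarrow> 0 \<le> \<mu> \<rho> \<and> \<mu> \<rho> \<le> 1"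
    and mu_meas: "\<mu> \<in> borel_measurable M"
    and eta_nonneg: "\<And>\<rho>. \<rho> \<in> density_ops m \<Longrightarrow> \<eta> \<rho> \<ge> 0"
    and eta_inv: "\<And>U \<rho>. unitary_mat m U \<Longrightarrow> \<rho> \<in> density_ops m \<Longrightarrow> \<eta> (U * \<rho> * adj U) = \<eta> \<rho>"
    and integrable: "\<And>A. A \<in> carrier_mat (m ^ n) (m ^ n) \<Longrightarrow>
                  integrable M (\<lambda>\<rho>. \<eta> \<rho> * Re (mtrace (tensor_pow m n \<rho> * A)))"
begin

definition "goodS S \<longleftrightarrow> {\<rho> \<in> space M. \<rho> \<in> S} \<in> sets M \<and>
   (\<forall>U \<rho>. unitary_mat m U \<longrightarrow> \<rho> \<in> space M \<longrightarrow> (U * \<rho> * adj U \<in> S \<longleftrightarrow> \<rho> \<in> S))"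

lemma goodS_mu: "goodS {\<rho>. P (\<mu> \<rho>)}" if "Measurable.pred borel P"
proof -
  have [measurable]: "\<mu> \<in> borel_measurable M" by (rule mu_meas)
  note [measurable] = that
  have "{\<rho> \<in> space M. \<rho> \<in> {\<rho>. P (\<mu> \<rho>)}} \<in> sets M" by simp measurable
  then show ?thesis unfolding goodS_def using mu_inv space by auto
qed

lemma goodS_all: "goodS {\<rho>. \<mu> \<rho> = 1}" "goodS {\<rho>. \<mu> \<rho> < 1}" "goodS {\<rho>. \<mu> \<rho> \<le> 1}"
  by (rule goodS_mu; measurable)+

lemma int_ind:
  assumes S: "goodS S" and X: "X \<in> carrier_mat NN NN"
  shows "integrable M (\<lambda>\<rho>. indicator S \<rho> * (\<eta> \<rho> * Re (mtrace (tensor_pow m n \<rho> * X))))"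
proof -
  have "integrable M (\<lambda>\<rho>. indicator {\<rho> \<in> space M. \<rho> \<in> S} \<rho> *\<^sub>R (\<eta> \<rho> * Re (mtrace (tensor_pow m n \<rho> * X))))"
    using S integrable[OF X] unfolding goodS_def by (intro integrable_mult_indicator) auto
  moreover have "integrable M (\<lambda>\<rho>. indicator {\<rho> \<in> space M. \<rho> \<in> S} \<rho> *\<^sub>R (\<eta> \<rho> * Re (mtrace (tensor_pow m n \<rho> * X)))) \<longleftrightarrow>
    integrable M (\<lambda>\<rho>. indicator S \<rho> * (\<eta> \<rho> * Re (mtrace (tensor_pow m n \<rho> * X))))"
    by (rule Bochner_Integration.integrable_cong) (auto simp: indicator_def)
  ultimately show ?thesis by simp
qed

lemma dens_trace_outer:
  assumes \<rho>: "\<rho> \<in> density_ops m" and u: "u \<in> carrier_vec m"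
  shows "mtrace (tensor_pow m n \<rho> * outer (tpv m n u) (tpv m n u)) = (cinner u (\<rho> *\<^sub>v u)) ^ n"
  using mtrace_outer[OF tensor_pow_carrier tpv_carrier tpv_carrier] tpv_cinner[OF m density_carrier[OF \<rho>] u u] by simp

lemma Gf_wint:
  assumes u: "u \<in> carrier_vec m"
  shows "Gf M \<eta> n S u = wint M \<eta> m n S (outer (tpv m n u) (tpv m n u))"
  unfolding Gf_def wint_def using dens_trace_outer[OF _ u] space by (intro Bochner_Integration.integral_cong) auto

lemma int_G:
  assumes S: "goodS S" and u: "u \<in> carrier_vec m"
  shows "integrable M (\<lambda>\<rho>. indicator S \<rho> * (\<eta> \<rho> * Re ((cinner u (\<rho> *\<^sub>v u)) ^ n)))"
proof -
  have "integrable M (\<lambda>\<rho>. indicator S \<rho> * (\<eta> \<rho> * Re (mtrace (tensor_pow m n \<rho> * outer (tpv m n u) (tpv m n u)))))"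
    by (rule int_ind[OF S]) simp
  moreover have "integrable M (\<lambda>\<rho>. indicator S \<rho> * (\<eta> \<rho> * Re (mtrace (tensor_pow m n \<rho> * outer (tpv m n u) (tpv m n u))))) \<longleftrightarrow>
     integrable M (\<lambda>\<rho>. indicator S \<rho> * (\<eta> \<rho> * Re ((cinner u (\<rho> *\<^sub>v u)) ^ n)))"
    using dens_trace_outer[OF _ u] space by (intro Bochner_Integration.integrable_cong) auto
  ultimately show ?thesis by simp
qed

lemma conj_vec:
  assumes U: "U \<in> carrier_mat m m" and \<rho>: "\<rho> \<in> carrier_mat m m" and u: "u \<in> carrier_vec m"
  shows "cinner u ((U * \<rho> * adj U) *\<^sub>v u) = cinner (adj U *\<^sub>v u) (\<rho> *\<^sub>v (adj U *\<^sub>v u))"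
proof -
  have aU: "adj U \<in> carrier_mat m m" using U by simp
  have Ur: "U * \<rho> \<in> carrier_mat m m" using U \<rho> by simp
  have "(U * \<rho> * adj U) *\<^sub>v u = (U * \<rho>) *\<^sub>v (adj U *\<^sub>v u)" by (rule assoc_mult_mat_vec[OF Ur aU u])
  also have "\<dots> = U *\<^sub>v (\<rho> *\<^sub>v (adj U *\<^sub>v u))" by (rule assoc_mult_mat_vec[OF U \<rho>]) (use aU u in simp)
  finally have "cinner u ((U * \<rho> * adj U) *\<^sub>v u) = cinner u (U *\<^sub>v (\<rho> *\<^sub>v (adj U *\<^sub>v u)))" by simp
  also have "\<dots> = cinner (adj U *\<^sub>v u) (\<rho> *\<^sub>v (adj U *\<^sub>v u))"
    by (rule cinner_adj[OF U u]) (use \<rho> aU u in simp)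
  finally show ?thesis .
qed

lemma Gf_inv:
  assumes S: "goodS S" and u: "u \<in> carrier_vec m" and U: "unitary_mat m U"
  shows "Gf M \<eta> n S u = Gf M \<eta> n S (adj U *\<^sub>v u)"
proof -
  let ?T = "\<lambda>\<rho>. U * \<rho> * adj U"
  let ?f = "\<lambda>\<rho>. indicator S \<rho> * (\<eta> \<rho> * Re ((cinner u (\<rho> *\<^sub>v u)) ^ n))"
  have Uc: "U \<in> carrier_mat m m" using U unfolding unitary_mat_def by auto
  have meas: "?T \<in> M \<rightarrow>\<^sub>M M" and d: "distr M M ?T = M" using M_inv[OF U] by auto
  have fm: "?f \<in> borel_measurable M" using int_G[OF S u] by (rule borel_measurable_integrable)
  have "Gf M \<eta> n S u = integral\<^sup>L (distr M M ?T) ?f" unfolding Gf_def d by (rule refl)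
  also have "\<dots> = (\<integral>\<rho>. ?f (?T \<rho>) \<partial>M)" by (rule integral_distr[OF meas fm])
  also have "\<dots> = Gf M \<eta> n S (adj U *\<^sub>v u)"
    unfolding Gf_def
  proof (intro Bochner_Integration.integral_cong refl)
    fix \<rho> assume \<rho>: "\<rho> \<in> space M"
    then have \<rho>d: "\<rho> \<in> density_ops m" using space by simp
    have "indicator S (?T \<rho>) = (indicator S \<rho> :: real)"
      using S \<rho> U unfolding goodS_def by (auto simp: indicator_def)
    moreover have "\<eta> (?T \<rho>) = \<eta> \<rho>" by (rule eta_inv[OF U \<rho>d])
    moreover have "cinner u (?T \<rho> *\<^sub>v u) = cinner (adj U *\<^sub>v u) (\<rho> *\<^sub>v (adj U *\<^sub>v u))"
      by (rule conj_vec[OF Uc density_carrier[OF \<rho>d] u])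
    ultimately show "?f (?T \<rho>) = indicator S \<rho> * (\<eta> \<rho> * Re ((cinner (adj U *\<^sub>v u) (\<rho> *\<^sub>v (adj U *\<^sub>v u))) ^ n))"
      by simp
  qed
  finally show ?thesis .
qed

lemma Gf_scale:
  shows "Gf M \<eta> n S (c \<cdot>\<^sub>v unit_vec m 0) = (Re (cnj c * c)) ^ n * Gf M \<eta> n S (unit_vec m 0)"
proof -
  let ?e = "unit_vec m 0 :: complex vec"
  have pt: "Re ((cinner (c \<cdot>\<^sub>v ?e) (\<rho> *\<^sub>v (c \<cdot>\<^sub>v ?e))) ^ n) = (Re (cnj c * c)) ^ n * Re ((cinner ?e (\<rho> *\<^sub>v ?e)) ^ n)"
    if \<rho>: "\<rho> \<in> density_ops m" for \<rho>
  proof -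
    have \<rho>c: "\<rho> \<in> carrier_mat m m" using density_carrier[OF \<rho>] .
    have "cinner (c \<cdot>\<^sub>v ?e) (\<rho> *\<^sub>v (c \<cdot>\<^sub>v ?e)) = cnj c * c * cinner ?e (\<rho> *\<^sub>v ?e)"
      using \<rho>c by (simp add: mult_mat_vec[OF \<rho>c] cinner_smult_left[of _ m] cinner_smult_right[of _ m])
    moreover have "cnj c * c = complex_of_real (Re (cnj c * c))"
      by (simp add: complex_eq_iff)
    ultimately have "cinner (c \<cdot>\<^sub>v ?e) (\<rho> *\<^sub>v (c \<cdot>\<^sub>v ?e)) = complex_of_real (Re (cnj c * c)) * cinner ?e (\<rho> *\<^sub>v ?e)"
      by simp
    then show ?thesis by (simp add: power_mult_distrib flip: of_real_power)
  qed
  have "Gf M \<eta> n S (c \<cdot>\<^sub>v ?e) = (\<integral>\<rho>. (Re (cnj c * c)) ^ n * (indicator S \<rho> * (\<eta> \<rho> * Re ((cinner ?e (\<rho> *\<^sub>v ?e)) ^ n))) \<partial>M)"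
    unfolding Gf_def using pt space by (intro Bochner_Integration.integral_cong refl) (auto simp: ac_simps)
  also have "\<dots> = (Re (cnj c * c)) ^ n * Gf M \<eta> n S ?e" unfolding Gf_def by simp
  finally show ?thesis .
qed

lemma Gf_formula:
  assumes S: "goodS S" and u: "u \<in> carrier_vec m"
  shows "Gf M \<eta> n S u = (Re (cinner u u)) ^ n * Gf M \<eta> n S (unit_vec m 0)"
proof -
  obtain U c where U: "unitary_mat m U" and Uu: "adj U *\<^sub>v u = c \<cdot>\<^sub>v unit_vec m 0" and c: "cnj c * c = cinner u u"
    using householder[OF m u] by blast
  have "Gf M \<eta> n S u = Gf M \<eta> n S (c \<cdot>\<^sub>v unit_vec m 0)" using Gf_inv[OF S u U] Uu by simp
  also have "\<dots> = (Re (cnj c * c)) ^ n * Gf M \<eta> n S (unit_vec m 0)" by (rule Gf_scale)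
  also have "cnj c * c = cinner u u" by (rule c)
  finally show ?thesis .
qed

end


lemma ratio_ineq:
  fixes kP kM t d b :: real
  assumes kP: "kP \<ge> 0" and kM: "kM \<ge> 0" and t: "t \<ge> 0" and d: "d \<ge> 0" and b: "b \<ge> kM * t"
    and n1: "kP * t + b \<noteq> 0" and n2: "kP * d + kM * d \<noteq> 0"
  shows "kP * t / (kP * t + b) \<le> kP * d / (kP * d + kM * d)"
proof -
  have dpos: "d > 0" using n2 d by (cases "d = 0") auto
  have spos: "kP + kM > 0"
  proof (rule ccontr)
    assume "\<not> kP + kM > 0"
    then have "kP = 0" "kM = 0" using kP kM by auto
    then show False using n2 by simp
  qed
  have rhs: "kP * d / (kP * d + kM * d) = kP / (kP + kM)"
  proof -
    have "kP * d + kM * d = d * (kP + kM)" by (simp add: algebra_simps)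
    then have "kP * d / (kP * d + kM * d) = (d * kP) / (d * (kP + kM))" by (simp add: mult.commute)
    also have "\<dots> = kP / (kP + kM)" using dpos by simp
    finally show ?thesis .
  qed
  have b0: "b \<ge> 0" using b kM t by (meson mult_nonneg_nonneg order_trans)
  have den: "kP * t + b > 0" using n1 kP t b0 by (metis add_nonneg_nonneg less_eq_real_def mult_nonneg_nonneg)
  have "kP * t * (kP + kM) \<le> kP * (kP * t + b)"
  proof -
    have "kP * (kM * t) \<le> kP * b" using b kP by (rule mult_left_mono)
    then show ?thesis by (simp add: algebra_simps)
  qed
  then have "kP * t / (kP * t + b) \<le> kP / (kP + kM)"
    using den spos by (simp add: divide_le_eq le_divide_eq mult.commute)
  then show ?thesis using rhs by simp
qed

lemma diag_entry:
  fixes X :: "complex mat"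
  assumes X: "X \<in> carrier_mat N N" and I: "I < N"
  shows "X $$ (I,I) = cinner (unit_vec N I) (X *\<^sub>v unit_vec N I)"
proof -
  have "cinner (unit_vec N I) (X *\<^sub>v unit_vec N I) = (\<Sum>J<N. cnj (unit_vec N I $ J) * (X *\<^sub>v unit_vec N I) $ J)"
    by (rule cinner_def2) simp
  also have "\<dots> = (\<Sum>J<N. if J = I then (X *\<^sub>v unit_vec N I) $ I else 0)"
    by (intro sum.cong refl) (auto simp: unit_vec_def)
  also have "\<dots> = (X *\<^sub>v unit_vec N I) $ I" using I by simp
  also have "\<dots> = X $$ (I,I)" by (rule mult_unit[OF X I I])
  finally show ?thesis by simp
qed

context qfull
begin

abbreviation "PP X \<equiv> wint M \<eta> m n {\<rho>. \<mu> \<rho> = 1} X"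
abbreviation "MM X \<equiv> wint M \<eta> m n {\<rho>. \<mu> \<rho> < 1} X"
abbreviation "TT X \<equiv> wint M \<eta> m n {\<rho>. \<mu> \<rho> \<le> 1} X"

lemma wint_lin:
  assumes S: "goodS S" and X: "X \<in> carrier_mat NN NN" and lf: "lin_form m n (\<lambda>A. mtrace (tensor_pow m n A * X))"
  shows "wint M \<eta> m n S X = Gf M \<eta> n S (unit_vec m 0) * Re (mtrace X)"
proof -
  obtain xs where xsc: "\<forall>p\<in>set xs. snd p \<in> carrier_vec m"
    and xe: "\<forall>A\<in>carrier_mat m m. mtrace (tensor_pow m n A * X) = sum_list (map (\<lambda>p. fst p * (cinner (snd p) (A *\<^sub>v snd p)) ^ n) xs)"
    using lf unfolding lin_form_def by blast
  define K where "K = length xs"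
  define c where "c i = fst (xs ! i)" for i
  define u where "u i = snd (xs ! i)" for i
  have uc: "u i \<in> carrier_vec m" if "i < K" for i using xsc that unfolding u_def K_def by auto
  have sl: "mtrace (tensor_pow m n A * X) = (\<Sum>i<K. c i * (cinner (u i) (A *\<^sub>v u i)) ^ n)"
    if A: "A \<in> carrier_mat m m" for A
    using xe A unfolding K_def c_def u_def by (simp add: sum_list_sum_nth atLeast0LessThan)
  have realpow: "Re (a * z ^ n) = Re a * Re (z ^ n)" if "Im z = 0" for a z :: complex
  proof -
    have "z = complex_of_real (Re z)" using that by (simp add: complex_eq_iff)
    then have "z ^ n = complex_of_real (Re z ^ n)" by (metis of_real_power)
    then show ?thesis by simp
  qed
  have pw: "Re (mtrace (tensor_pow m n \<rho> * X)) = (\<Sum>i<K. Re (c i) * Re ((cinner (u i) (\<rho> *\<^sub>v u i)) ^ n))"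
    if \<rho>: "\<rho> \<in> density_ops m" for \<rho>
  proof -
    have "Im (cinner (u i) (\<rho> *\<^sub>v u i)) = 0" if "i < K" for i
      using \<rho> uc[OF that] unfolding density_ops_def positive_op_def by auto
    then show ?thesis unfolding sl[OF density_carrier[OF \<rho>]] Re_sum using realpow by simp
  qed
  have "wint M \<eta> m n S X = (\<integral>\<rho>. (\<Sum>i<K. Re (c i) * (indicator S \<rho> * (\<eta> \<rho> * Re ((cinner (u i) (\<rho> *\<^sub>v u i)) ^ n)))) \<partial>M)"
    unfolding wint_def
    by (intro Bochner_Integration.integral_cong refl)
       (use pw space in \<open>simp add: sum_distrib_left sum_distrib_right ac_simps\<close>)
  also have "\<dots> = (\<Sum>i<K. (\<integral>\<rho>. Re (c i) * (indicator S \<rho> * (\<eta> \<rho> * Re ((cinner (u i) (\<rho> *\<^sub>v u i)) ^ n))) \<partial>M))"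
    by (rule Bochner_Integration.integral_sum) (use int_G[OF S uc] in auto)
  also have "\<dots> = (\<Sum>i<K. Re (c i) * Gf M \<eta> n S (u i))"
    unfolding Gf_def by (intro sum.cong refl Bochner_Integration.integral_mult_right) (use int_G[OF S uc] in auto)
  also have "\<dots> = (\<Sum>i<K. Re (c i) * (Re (cinner (u i) (u i))) ^ n) * Gf M \<eta> n S (unit_vec m 0)"
  proof -
    have "(\<Sum>i<K. Re (c i) * Gf M \<eta> n S (u i)) = (\<Sum>i<K. Gf M \<eta> n S (unit_vec m 0) * (Re (c i) * (Re (cinner (u i) (u i))) ^ n))"
      using Gf_formula[OF S uc] by (intro sum.cong refl) (simp add: ac_simps)
    then show ?thesis by (simp add: sum_distrib_left[symmetric] mult.commute)
  qed
  also have "(\<Sum>i<K. Re (c i) * (Re (cinner (u i) (u i))) ^ n) = Re (mtrace X)"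
  proof -
    have "mtrace X = mtrace (tensor_pow m n (1\<^sub>m m) * X)" using X by (simp add: tensor_one[OF m])
    also have "\<dots> = (\<Sum>i<K. c i * (cinner (u i) (u i)) ^ n)" using sl[of "1\<^sub>m m"] uc by simp
    finally have "Re (mtrace X) = (\<Sum>i<K. Re (c i * (cinner (u i) (u i)) ^ n))" by simp
    also have "\<dots> = (\<Sum>i<K. Re (c i) * (Re (cinner (u i) (u i))) ^ n)"
    proof (intro sum.cong refl)
      fix i assume "i \<in> {..<K}"
      then have "Im (cinner (u i) (u i)) = 0" using cinner_self_nonneg[OF uc] by auto
      then show "Re (c i * (cinner (u i) (u i)) ^ n) = Re (c i) * (Re (cinner (u i) (u i))) ^ n"
        using realpow by (simp add: complex_eq_iff Re_power_real)
    qed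
    finally show ?thesis by simp
  qed
  finally show ?thesis by simp
qed

end


context qfull
begin

lemma Pp_idem: "Pi_p * Pi_p * Pi_p = Pi_p"
  using Pi_p unfolding is_orth_proj_def by auto

lemma sandwich_p:
  assumes Q: "Q \<in> carrier_mat NN NN" and x: "x \<in> carrier_vec NN"
  shows "cinner x ((Pi_p * Q * Pi_p) *\<^sub>v x) = cinner (Pi_p *\<^sub>v x) (Q *\<^sub>v (Pi_p *\<^sub>v x))"
proof -
  have PQ: "Pi_p * Q \<in> carrier_mat NN NN" by (rule mult_carrier_mat[OF Pp_carrier Q])
  have "(Pi_p * Q * Pi_p) *\<^sub>v x = (Pi_p * Q) *\<^sub>v (Pi_p *\<^sub>v x)"
    by (rule assoc_mult_mat_vec[OF PQ Pp_carrier x])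
  also have "\<dots> = Pi_p *\<^sub>v (Q *\<^sub>v (Pi_p *\<^sub>v x))"
    by (rule assoc_mult_mat_vec[OF Pp_carrier Q]) (use x in simp)
  finally have "(Pi_p * Q * Pi_p) *\<^sub>v x = Pi_p *\<^sub>v (Q *\<^sub>v (Pi_p *\<^sub>v x))" .
  then show ?thesis using proj_adj[OF Pi_p x, of "Q *\<^sub>v (Pi_p *\<^sub>v x)"] Q x by simp
qed

lemma tr_nonneg:
  assumes Q: "positive_op NN Q"
  shows "Re (mtrace (Pi_p * Q * Pi_p)) \<ge> 0"
proof -
  have Qc: "Q \<in> carrier_mat NN NN" using Q unfolding positive_op_def by auto
  have X: "Pi_p * Q * Pi_p \<in> carrier_mat NN NN" by (rule sand_carrier(2)[OF Qc])
  have "mtrace (Pi_p * Q * Pi_p) = (\<Sum>I<NN. (Pi_p * Q * Pi_p) $$ (I,I))"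
    unfolding mtrace_def using carrier_matD(1)[OF Pp_carrier] by simp
  also have "\<dots> = (\<Sum>I<NN. cinner (Pi_p *\<^sub>v unit_vec NN I) (Q *\<^sub>v (Pi_p *\<^sub>v unit_vec NN I)))"
    by (intro sum.cong refl) (simp add: diag_entry[OF X] sandwich_p[OF Qc])
  finally have "Re (mtrace (Pi_p * Q * Pi_p)) = (\<Sum>I<NN. Re (cinner (Pi_p *\<^sub>v unit_vec NN I) (Q *\<^sub>v (Pi_p *\<^sub>v unit_vec NN I))))"
    by simp
  also have "\<dots> \<ge> 0" using Q unfolding positive_op_def by (intro sum_nonneg) auto
  finally show ?thesis .
qed

lemma kappa_nonneg: "Gf M \<eta> n S (unit_vec m 0) \<ge> 0"
  unfolding Gf_def
proof (rule Bochner_Integration.integral_nonneg)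
  fix \<rho> assume "\<rho> \<in> space M"
  then have \<rho>: "\<rho> \<in> density_ops m" using space by simp
  have e: "unit_vec m 0 \<in> carrier_vec m" by simp
  have "Im (cinner (unit_vec m 0) (\<rho> *\<^sub>v unit_vec m 0)) = 0 \<and> Re (cinner (unit_vec m 0) (\<rho> *\<^sub>v unit_vec m 0)) \<ge> 0"
    using \<rho> e unfolding density_ops_def positive_op_def by blast
  then have "Re ((cinner (unit_vec m 0) (\<rho> *\<^sub>v unit_vec m 0)) ^ n) \<ge> 0"
    by (metis Re_power_real complex_is_Real_iff zero_le_power)
  then show "0 \<le> indicator S \<rho> * (\<eta> \<rho> * Re ((cinner (unit_vec m 0) (\<rho> *\<^sub>v unit_vec m 0)) ^ n))"
    using eta_nonneg[OF \<rho>] by simp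
qed

lemma P_sand: "Q \<in> carrier_mat NN NN \<Longrightarrow> PP Q = PP (Pi_p * Q * Pi_p)"
  unfolding wint_def
proof (intro Bochner_Integration.integral_cong refl)
  fix \<rho> assume Q: "Q \<in> carrier_mat NN NN" and "\<rho> \<in> space M"
  then have \<rho>: "\<rho> \<in> density_ops m" using space by simp
  show "indicator {\<rho>. \<mu> \<rho> = 1} \<rho> * (\<eta> \<rho> * Re (mtrace (tensor_pow m n \<rho> * Q))) =
        indicator {\<rho>. \<mu> \<rho> = 1} \<rho> * (\<eta> \<rho> * Re (mtrace (tensor_pow m n \<rho> * (Pi_p * Q * Pi_p))))"
  proof (cases "\<mu> \<rho> = 1")
    case True
    then have "rank_one m \<rho>" using mu_pure[OF \<rho>] by simp
    then show ?thesis using trace_split[OF \<rho> Q] pure_Pm_zero(1)[OF \<rho> _ Q] by simp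
  qed simp
qed

lemma P_Pm: "PP Pi_m = 0"
proof -
  have "PP Pi_m = (\<integral>\<rho>. 0 \<partial>M)"
    unfolding wint_def
  proof (intro Bochner_Integration.integral_cong refl)
    fix \<rho> assume "\<rho> \<in> space M"
    then have \<rho>: "\<rho> \<in> density_ops m" using space by simp
    show "indicator {\<rho>. \<mu> \<rho> = 1} \<rho> * (\<eta> \<rho> * Re (mtrace (tensor_pow m n \<rho> * Pi_m))) = 0"
    proof (cases "\<mu> \<rho> = 1")
      case True
      then have "rank_one m \<rho>" using mu_pure[OF \<rho>] by simp
      then show ?thesis using pure_Pm_zero(2)[OF \<rho> _ Pm_carrier] by simp
    qed simp
  qed
  then show ?thesis by simp
qed

lemma M_sand: "positive_op NN Q \<Longrightarrow> MM (Pi_p * Q * Pi_p) \<le> MM Q"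
proof -
  assume Q: "positive_op NN Q"
  have Qc: "Q \<in> carrier_mat NN NN" using Q unfolding positive_op_def by auto
  show ?thesis unfolding wint_def
  proof (rule Bochner_Integration.integral_mono)
    show "integrable M (\<lambda>\<rho>. indicator {\<rho>. \<mu> \<rho> < 1} \<rho> * (\<eta> \<rho> * Re (mtrace (tensor_pow m n \<rho> * (Pi_p * Q * Pi_p)))))"
      by (rule int_ind[OF goodS_all(2) sand_carrier(2)[OF Qc]])
    show "integrable M (\<lambda>\<rho>. indicator {\<rho>. \<mu> \<rho> < 1} \<rho> * (\<eta> \<rho> * Re (mtrace (tensor_pow m n \<rho> * Q))))"
      by (rule int_ind[OF goodS_all(2) Qc])
    fix \<rho> assume "\<rho> \<in> space M"
    then have \<rho>: "\<rho> \<in> density_ops m" using space by simp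
    have "Re (mtrace (tensor_pow m n \<rho> * (Pi_p * Q * Pi_p))) \<le> Re (mtrace (tensor_pow m n \<rho> * Q))"
      using trace_split[OF \<rho> Qc] trace_pos(2)[OF \<rho> Q] by simp
    then show "indicator {\<rho>. \<mu> \<rho> < 1} \<rho> * (\<eta> \<rho> * Re (mtrace (tensor_pow m n \<rho> * (Pi_p * Q * Pi_p))))
        \<le> indicator {\<rho>. \<mu> \<rho> < 1} \<rho> * (\<eta> \<rho> * Re (mtrace (tensor_pow m n \<rho> * Q)))"
      using eta_nonneg[OF \<rho>] by (intro mult_left_mono) (auto simp: indicator_def)
  qed
qed

lemma wint_nonneg:
  assumes Q: "positive_op NN Q"
  shows "wint M \<eta> m n S Q \<ge> 0"
  unfolding wint_def
proof (rule Bochner_Integration.integral_nonneg)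
  fix \<rho> assume "\<rho> \<in> space M"
  then have \<rho>: "\<rho> \<in> density_ops m" using space by simp
  show "0 \<le> indicator S \<rho> * (\<eta> \<rho> * Re (mtrace (tensor_pow m n \<rho> * Q)))"
    using eta_nonneg[OF \<rho>] trace_pos(1)[OF \<rho> Q] by simp
qed

lemma T_split: "X \<in> carrier_mat NN NN \<Longrightarrow> TT X = PP X + MM X"
proof -
  assume X: "X \<in> carrier_mat NN NN"
  have "TT X = (\<integral>\<rho>. indicator {\<rho>. \<mu> \<rho> = 1} \<rho> * (\<eta> \<rho> * Re (mtrace (tensor_pow m n \<rho> * X))) +
      indicator {\<rho>. \<mu> \<rho> < 1} \<rho> * (\<eta> \<rho> * Re (mtrace (tensor_pow m n \<rho> * X))) \<partial>M)"
    unfolding wint_def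
  proof (intro Bochner_Integration.integral_cong refl)
    fix \<rho> assume "\<rho> \<in> space M"
    then have \<rho>: "\<rho> \<in> density_ops m" using space by simp
    then show "indicator {\<rho>. \<mu> \<rho> \<le> 1} \<rho> * (\<eta> \<rho> * Re (mtrace (tensor_pow m n \<rho> * X))) =
      indicator {\<rho>. \<mu> \<rho> = 1} \<rho> * (\<eta> \<rho> * Re (mtrace (tensor_pow m n \<rho> * X))) +
      indicator {\<rho>. \<mu> \<rho> < 1} \<rho> * (\<eta> \<rho> * Re (mtrace (tensor_pow m n \<rho> * X)))"
      using mu_range[OF \<rho>] by (auto simp: indicator_def)
  qed
  also have "\<dots> = PP X + MM X"
    unfolding wint_def by (rule Bochner_Integration.integral_add[OF int_ind[OF goodS_all(1) X] int_ind[OF goodS_all(2) X]])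
  finally show ?thesis .
qed

lemma sand_formula:
  assumes Q: "Q \<in> carrier_mat NN NN"
  shows "PP (Pi_p * Q * Pi_p) = Gf M \<eta> n {\<rho>. \<mu> \<rho> = 1} (unit_vec m 0) * Re (mtrace (Pi_p * Q * Pi_p))"
    and "MM (Pi_p * Q * Pi_p) = Gf M \<eta> n {\<rho>. \<mu> \<rho> < 1} (unit_vec m 0) * Re (mtrace (Pi_p * Q * Pi_p))"
  by (rule wint_lin[OF goodS_all(1) sand_carrier(2)[OF Q] lf_trace[OF Q]])
     (rule wint_lin[OF goodS_all(2) sand_carrier(2)[OF Q] lf_trace[OF Q]])

lemma main:
  "povm2 (m ^ n) Pi_p Pi_m \<and>
    (\<forall>Qp Qm. povm2 (m ^ n) Qp Qm \<longrightarrow>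
       ((wint M \<eta> m n {\<rho>. \<mu> \<rho> \<le> 1} Qp \<noteq> 0 \<and> wint M \<eta> m n {\<rho>. \<mu> \<rho> \<le> 1} Pi_p \<noteq> 0
          \<longrightarrow> p_pure_p M \<eta> \<mu> m n Qp \<le> p_pure_p M \<eta> \<mu> m n Pi_p) \<and>
        (wint M \<eta> m n {\<rho>. \<mu> \<rho> \<le> 1} Qm \<noteq> 0 \<and> wint M \<eta> m n {\<rho>. \<mu> \<rho> \<le> 1} Pi_m \<noteq> 0
          \<longrightarrow> p_mixed_m M \<eta> \<mu> m n Qm \<le> p_mixed_m M \<eta> \<mu> m n Pi_m)))"
proof (intro conjI allI impI)
  show "povm2 (m ^ n) Pi_p Pi_m" by (rule povm)
next
  fix Qp Qm assume pv: "povm2 (m ^ n) Qp Qm"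
    and nz: "TT Qp \<noteq> 0 \<and> TT Pi_p \<noteq> 0"
  have Q: "positive_op NN Qp" using pv unfolding povm2_def by auto
  have Qc: "Qp \<in> carrier_mat NN NN" using Q unfolding positive_op_def by auto
  define kP where "kP = Gf M \<eta> n {\<rho>. \<mu> \<rho> = 1} (unit_vec m 0)"
  define kM where "kM = Gf M \<eta> n {\<rho>. \<mu> \<rho> < 1} (unit_vec m 0)"
  define t where "t = Re (mtrace (Pi_p * Qp * Pi_p))"
  define d where "d = Re (mtrace (Pi_p * Pi_p * Pi_p))"
  have kP: "kP \<ge> 0" and kM: "kM \<ge> 0" unfolding kP_def kM_def by (rule kappa_nonneg)+
  have t: "t \<ge> 0" unfolding t_def by (rule tr_nonneg[OF Q])
  have d: "d \<ge> 0" unfolding d_def by (rule tr_nonneg[OF proj_positive[OF Pi_p]])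
  have PQ: "PP Qp = kP * t" using P_sand[OF Qc] sand_formula(1)[OF Qc] unfolding kP_def t_def by simp
  have MQ: "MM Qp \<ge> kM * t" using M_sand[OF Q] sand_formula(2)[OF Qc] unfolding kM_def t_def by simp
  have PPi: "PP Pi_p = kP * d" using P_sand[OF Pp_carrier] sand_formula(1)[OF Pp_carrier] unfolding kP_def d_def by simp
  have MPi: "MM Pi_p = kM * d" using sand_formula(2)[OF Pp_carrier] Pp_idem unfolding kM_def d_def by simp
  have TQ: "TT Qp = kP * t + MM Qp" using T_split[OF Qc] PQ by simp
  have TPi: "TT Pi_p = kP * d + kM * d" using T_split[OF Pp_carrier] PPi MPi by simp
  have "kP * t / (kP * t + MM Qp) \<le> kP * d / (kP * d + kM * d)"
    by (rule ratio_ineq[OF kP kM t d MQ]) (use nz TQ TPi in auto)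
  then show "p_pure_p M \<eta> \<mu> m n Qp \<le> p_pure_p M \<eta> \<mu> m n Pi_p"
    unfolding p_pure_p_def using PQ PPi TQ TPi by simp
next
  fix Qp Qm assume pv: "povm2 (m ^ n) Qp Qm"
    and nz: "TT Qm \<noteq> 0 \<and> TT Pi_m \<noteq> 0"
  have Q: "positive_op NN Qm" using pv unfolding povm2_def by auto
  have Qc: "Qm \<in> carrier_mat NN NN" using Q unfolding positive_op_def by auto
  have "TT Pi_m = MM Pi_m" using T_split[OF Pm_carrier] P_Pm by simp
  then have r: "p_mixed_m M \<eta> \<mu> m n Pi_m = 1" unfolding p_mixed_m_def using nz by simp
  have P0: "PP Qm \<ge> 0" and M0: "MM Qm \<ge> 0" by (rule wint_nonneg[OF Q])+
  have TQ: "TT Qm = PP Qm + MM Qm" by (rule T_split[OF Qc])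
  have "MM Qm / TT Qm \<le> 1"
    using P0 M0 TQ nz by (simp add: divide_le_eq)
  then show "p_mixed_m M \<eta> \<mu> m n Qm \<le> p_mixed_m M \<eta> \<mu> m n Pi_m"
    unfolding r unfolding p_mixed_m_def by simp
qed

end


theorem theorem2:
  fixes m n :: nat
    and M :: "complex mat measure"
    and \<eta> \<mu> :: "complex mat \<Rightarrow> real"
    and Pi_p Pi_m :: "complex mat"
  assumes m: "m \<ge> 1" and n: "n \<ge> 1"
    and space: "space M = density_ops m"
    and M_inv: "\<And>U. unitary_mat m U \<Longrightarrow>
                  (\<lambda>\<rho>. U * \<rho> * adj U) \<in> M \<rightarrow>\<^sub>M M \<and> distr M M (\<lambda>\<rho>. U * \<rho> * adj U) = M"
    and mu_inv: "\<And>U \<rho>. unitary_mat m U \<Longrightarrow> \<rho> \<in> density_ops m \<Longrightarrow> \<mu> (U * \<rho> * adj U) = \<mu> \<rho>"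
    and mu_pure: "\<And>\<rho>. \<rho> \<in> density_ops m \<Longrightarrow> \<mu> \<rho> = 1 \<longleftrightarrow> rank_one m \<rho>"
    and mu_range: "\<And>\<rho>. \<rho> \<in> density_ops m \<Longrightarrow> 0 \<le> \<mu> \<rho> \<and> \<mu> \<rho> \<le> 1"
    and mu_meas: "\<mu> \<in> borel_measurable M"
    and eta_nonneg: "\<And>\<rho>. \<rho> \<in> density_ops m \<Longrightarrow> \<eta> \<rho> \<ge> 0"
    and eta_inv: "\<And>U \<rho>. unitary_mat m U \<Longrightarrow> \<rho> \<in> density_ops m \<Longrightarrow> \<eta> (U * \<rho> * adj U) = \<eta> \<rho>"
    and integrable: "\<And>A. A \<in> carrier_mat (m ^ n) (m ^ n) \<Longrightarrow>
                  integrable M (\<lambda>\<rho>. \<eta> \<rho> * Re (mtrace (tensor_pow m n \<rho> * A)))"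
    and Pi_p: "is_orth_proj (m ^ n) (sym_subspace m n) Pi_p"
    and Pi_m: "is_orth_proj (m ^ n) (asym_subspace m n) Pi_m"
  shows "povm2 (m ^ n) Pi_p Pi_m \<and>
    (\<forall>Qp Qm. povm2 (m ^ n) Qp Qm \<longrightarrow>
       ((wint M \<eta> m n {\<rho>. \<mu> \<rho> \<le> 1} Qp \<noteq> 0 \<and> wint M \<eta> m n {\<rho>. \<mu> \<rho> \<le> 1} Pi_p \<noteq> 0
          \<longrightarrow> p_pure_p M \<eta> \<mu> m n Qp \<le> p_pure_p M \<eta> \<mu> m n Pi_p) \<and>
        (wint M \<eta> m n {\<rho>. \<mu> \<rho> \<le> 1} Qm \<noteq> 0 \<and> wint M \<eta> m n {\<rho>. \<mu> \<rho> \<le> 1} Pi_m \<noteq> 0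
          \<longrightarrow> p_mixed_m M \<eta> \<mu> m n Qm \<le> p_mixed_m M \<eta> \<mu> m n Pi_m)))"
proof -
  interpret qfull m n Pi_p Pi_m M \<eta> \<mu>
    using m Pi_p Pi_m space M_inv mu_inv mu_pure mu_range mu_meas eta_nonneg eta_inv integrable
    by unfold_locales auto
  show ?thesis by (rule main)
qed

end
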